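(* All POPs $(a,b,c;d;e)$ with $\{d,e\}=\{2,5\}$ or $\{d,e\}=\{3,5\}$ and $(a,b,c)$ an arbitrary ordering of $[5]\setminus\{d,e\}$ are Wilf-equivalent to one another.
   Context: A partially ordered pattern (POP) $p$ of size $k$ is a partial order $\le_p$ on $[k]$. A permutation $\pi=\pi_1\cdots\pi_n$ contains $p$ if there are indices $i_1<\dots<i_k$ with $\pi_{i_j}<\pi_{i_m}$ whenever $j<_p m$; otherwise it avoids $p$. $p\sim q$ (Wilf-equivalence) means the numbers of permutations of $[n]$ avoiding $p$ and avoiding $q$ coincide for all $n\ge1$. Notation: $(a,b,c;d;e)$ denotes the POP of size $5$ on $\{a,b,c,d,e\}=[5]$ in which $c<b<a$ form a chain and $d,e$ are isolated. *)

theory Defs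
  imports "HOL-Combinatorics.Permutations"
begin

text \<open>A POP of size k is given by its strict order relation P on {1..k}:
  P j m means j <_p m.  A permutation of [n] is a function permuting {1..n};
  its one-line notation is pi 1, ..., pi n.\<close>

definition contains_pop :: "(nat \<Rightarrow> nat \<Rightarrow> bool) \<Rightarrow> nat \<Rightarrow> nat \<Rightarrow> (nat \<Rightarrow> nat) \<Rightarrow> bool" where
  "contains_pop P k n \<pi> \<longleftrightarrow>
     (\<exists>\<iota>. strict_mono_on {1..k} \<iota> \<and> \<iota> ` {1..k} \<subseteq> {1..n} \<and>
          (\<forall>j\<in>{1..k}. \<forall>m\<in>{1..k}. P j m \<longrightarrow> \<pi> (\<iota> j) < \<pi> (\<iota> m)))"

definition avoiders :: "(nat \<Rightarrow> nat \<Rightarrow> bool) \<Rightarrow> nat \<Rightarrow> nat \<Rightarrow> (nat \<Rightarrow> nat) set" where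
  "avoiders P k n = {\<pi>. \<pi> permutes {1..n} \<and> \<not> contains_pop P k n \<pi>}"

definition wilf_equiv :: "(nat \<Rightarrow> nat \<Rightarrow> bool) \<Rightarrow> (nat \<Rightarrow> nat \<Rightarrow> bool) \<Rightarrow> nat \<Rightarrow> bool" where
  "wilf_equiv P Q k \<longleftrightarrow> (\<forall>n\<ge>1. card (avoiders P k n) = card (avoiders Q k n))"

text \<open>The POP (a,b,c;d;e) of size 5: c <_p b <_p a is a chain, d and e are isolated.\<close>
definition pop5 :: "nat \<Rightarrow> nat \<Rightarrow> nat \<Rightarrow> nat \<Rightarrow> nat \<Rightarrow> nat \<Rightarrow> nat \<Rightarrow> bool" where
  "pop5 a b c d e x y \<longleftrightarrow> (x, y) \<in> {(c, b), (b, a), (c, a)}"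

end

theory Submission
  imports Defs "HOL-Combinatorics.Multiset_Permutations"
begin


type_synonym pat = "bool \<Rightarrow> bool \<Rightarrow> bool \<Rightarrow> bool"

definition occ :: "pat \<Rightarrow> nat \<Rightarrow> nat list \<Rightarrow> bool" where
  "occ P x w \<longleftrightarrow> (\<exists>i j. i < j \<and> j < length w \<and> P (x < w!i) (x < w!j) (w!i < w!j))"

definition okslot :: "pat \<Rightarrow> nat \<Rightarrow> nat list \<Rightarrow> bool" where
  "okslot P v w \<longleftrightarrow> \<not>(\<exists>i j. i < j \<and> j < length w \<and> P (v \<le> w!i) (v \<le> w!j) (w!i < w!j))"

fun gav :: "pat \<Rightarrow> nat list \<Rightarrow> bool" where
  "gav P [] = True"
| "gav P (x # r) = (\<not> occ P x (tl r) \<and> gav P r)"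

definition bad3 :: "pat \<Rightarrow> nat list \<Rightarrow> bool" where
  "bad3 P xs \<longleftrightarrow> (\<exists>i k l. i + 2 \<le> k \<and> k < l \<and> l < length xs \<and>
      P (xs!i < xs!k) (xs!i < xs!l) (xs!k < xs!l))"

lemma gav_iff: "gav P xs \<longleftrightarrow> \<not> bad3 P xs"
proof (induction xs)
  case Nil then show ?case by (simp add: bad3_def)
next
  case (Cons x r)
  have "bad3 P (x # r) \<longleftrightarrow> occ P x (tl r) \<or> bad3 P r"
  proof
    assume "bad3 P (x # r)"
    then obtain i k l where h: "i + 2 \<le> k" "k < l" "l < length (x#r)"
       "P ((x#r)!i < (x#r)!k) ((x#r)!i < (x#r)!l) ((x#r)!k < (x#r)!l)"
      unfolding bad3_def by blast
    show "occ P x (tl r) \<or> bad3 P r"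
    proof (cases i)
      case 0
      have "occ P x (tl r)" unfolding occ_def
        apply (rule exI[of _ "k - 2"], rule exI[of _ "l - 2"])
        using h 0 by (cases r) (auto simp: nth_Cons' numeral_2_eq_2 split: if_splits)
      then show ?thesis by blast
    next
      case (Suc i')
      have "bad3 P r" unfolding bad3_def
        apply (rule exI[of _ i'], rule exI[of _ "k - 1"], rule exI[of _ "l - 1"])
        using h Suc by (auto simp: nth_Cons' split: if_splits)
      then show ?thesis by blast
    qed
  next
    assume "occ P x (tl r) \<or> bad3 P r"
    then show "bad3 P (x # r)"
    proof
      assume "occ P x (tl r)"
      then obtain i j where h: "i < j" "j < length (tl r)" "P (x < tl r!i) (x < tl r!j) (tl r!i < tl r!j)"
        unfolding occ_def by blast
      show ?thesis unfolding bad3_def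
        apply (rule exI[of _ 0], rule exI[of _ "i + 2"], rule exI[of _ "j+2"])
        using h by (cases r) auto
    next
      assume "bad3 P r"
      then obtain i k l where h: "i + 2 \<le> k" "k < l" "l < length r"
       "P (r!i < r!k) (r!i < r!l) (r!k < r!l)"
      unfolding bad3_def by blast
      show ?thesis unfolding bad3_def
        apply (rule exI[of _ "Suc i"], rule exI[of _ "Suc k"], rule exI[of _ "Suc l"])
        using h by auto
    qed
  qed
  then show ?case using Cons by simp
qed

lemma gav_map_mono:
  assumes "\<forall>x\<in>set xs. \<forall>y\<in>set xs. f x < f y \<longleftrightarrow> x < y"
  shows "gav P (map f xs) = gav P xs"
proof -
  have key: "f (xs!i) < f (xs!j) \<longleftrightarrow> xs!i < xs!j" if "i < length xs" "j < length xs" for i j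
    using assms that by (simp add: nth_mem)
  have "bad3 P (map f xs) = bad3 P xs"
    unfolding bad3_def
    apply (rule iff_exI)+
    apply (intro conj_cong refl)
    apply (simp_all add: key)
    done
  then show ?thesis by (simp add: gav_iff)
qed

lemma gav_map_anti:
  assumes "distinct xs" "\<forall>x\<in>set xs. \<forall>y\<in>set xs. x \<noteq> y \<longrightarrow> (f x < f y \<longleftrightarrow> y < x)"
  shows "gav P (map f xs) = gav (\<lambda>a b c. P (\<not>a) (\<not>b) (\<not>c)) xs"
proof -
  have key: "f (xs!i) < f (xs!j) \<longleftrightarrow> \<not> xs!i < xs!j" if "i < j" "j < length xs" for i j
  proof -
    have "xs!i \<noteq> xs!j" using assms(1) that by (simp add: nth_eq_iff_index_eq)
    then show ?thesis using assms(2) that by (auto simp: nth_mem)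
  qed
  have "bad3 P (map f xs) = bad3 (\<lambda>a b c. P (\<not>a) (\<not>b) (\<not>c)) xs"
    unfolding bad3_def
    apply (rule iff_exI)+
    apply (intro conj_cong refl)
    apply (simp_all add: key)
    done
  then show ?thesis by (simp add: gav_iff)
qed



definition sh :: "nat \<Rightarrow> nat \<Rightarrow> nat" where "sh v y = (if y < v then y else Suc y)"
definition ush :: "nat \<Rightarrow> nat \<Rightarrow> nat" where "ush v y = (if y < v then y else y - 1)"
definition us :: "nat \<Rightarrow> nat \<Rightarrow> nat" where "us v w = (if w \<le> v then w else w - 1)"
definition Av :: "pat \<Rightarrow> nat \<Rightarrow> nat list set" where
  "Av P m = {xs \<in> permutations_of_set {0..<m}. gav P xs}"
definition child :: "nat \<Rightarrow> nat list \<Rightarrow> nat list" where "child v p = v # map (sh v) p"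

lemma sh_less[simp]: "sh v x < sh v y \<longleftrightarrow> x < y" by (simp add: sh_def)
lemma v_less_sh[simp]: "v < sh v y \<longleftrightarrow> v \<le> y" by (simp add: sh_def)
lemma le_sh[simp]: "w \<le> sh v y \<longleftrightarrow> us v w \<le> y" by (auto simp: sh_def us_def)
lemma sh_neq[simp]: "sh v y \<noteq> v" by (simp add: sh_def)
lemma inj_sh: "inj (sh v)" by (auto simp: inj_def sh_def split: if_splits)
lemma ush_sh[simp]: "ush v (sh v y) = y" by (simp add: sh_def ush_def)
lemma sh_ush: "y \<noteq> v \<Longrightarrow> sh v (ush v y) = y" by (auto simp: sh_def ush_def)

lemma ex2_cong: "(\<And>i j. i < j \<Longrightarrow> j < n \<Longrightarrow> A i j = B i j) \<Longrightarrow>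
   (\<exists>i j. i < j \<and> j < n \<and> A i j) = (\<exists>i j. i < j \<and> j < n \<and> B i j)"
  by (metis (mono_tags))

lemma occ_sh: "occ P v (map (sh v) w) \<longleftrightarrow> \<not> okslot P v w"
  unfolding occ_def okslot_def length_map
  unfolding not_not by (rule ex2_cong) simp

lemma okslot_sh: "okslot P w (map (sh v) xs) \<longleftrightarrow> okslot P (us v w) xs"
  unfolding okslot_def length_map
  by (rule arg_cong[where f=Not], rule ex2_cong) simp

lemma okslot_cons: "okslot P w (x # xs) \<longleftrightarrow> okslot P w xs \<and> \<not>(\<exists>y\<in>set xs. P (w \<le> x) (w \<le> y) (x < y))"
proof -
  have "(\<exists>i j. i < j \<and> j < length (x # xs) \<and> P (w \<le> (x # xs) ! i) (w \<le> (x # xs) ! j) ((x # xs) ! i < (x # xs) ! j))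
     \<longleftrightarrow> (\<exists>i j. i < j \<and> j < length xs \<and> P (w \<le> xs ! i) (w \<le> xs ! j) (xs ! i < xs ! j))
        \<or> (\<exists>y\<in>set xs. P (w \<le> x) (w \<le> y) (x < y))" (is "?L \<longleftrightarrow> ?A \<or> ?B")
  proof
    assume ?L
    then obtain i j where ij: "i < j" "j < length (x # xs)" "P (w \<le> (x # xs) ! i) (w \<le> (x # xs) ! j) ((x # xs) ! i < (x # xs) ! j)" by blast
    then obtain j' where j': "j = Suc j'" by (cases j) auto
    show "?A \<or> ?B"
    proof (cases i)
      case 0
      then have "?B" using ij j' by (auto simp: nth_mem)
      then show ?thesis ..
    next
      case (Suc i')
      then have "?A" using ij j' by auto
      then show ?thesis ..
    qed
  next
    assume "?A \<or> ?B"
    then show ?L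
    proof
      assume ?A
      then obtain i j where "i < j" "j < length xs" "P (w \<le> xs ! i) (w \<le> xs ! j) (xs ! i < xs ! j)" by blast
      then show ?L by (intro exI[of _ "Suc i"] exI[of _ "Suc j"]) simp
    next
      assume ?B
      then obtain j where "j < length xs" "P (w \<le> x) (w \<le> xs!j) (x < xs!j)" by (metis in_set_conv_nth)
      then show ?L by (intro exI[of _ 0] exI[of _ "Suc j"]) simp
    qed
  qed
  then show ?thesis unfolding okslot_def by blast
qed

lemma okslot_tl: "okslot P w xs \<Longrightarrow> okslot P w (tl xs)"
  by (cases xs) (auto simp: okslot_cons)

lemma gav_child: "gav P (child v p) \<longleftrightarrow> okslot P v (tl p) \<and> gav P p"
proof -
  have "gav P (map (sh v) p) = gav P p" by (rule gav_map_mono) simp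
  then show ?thesis by (simp add: child_def map_tl[symmetric] occ_sh)
qed

lemma sh_image: "v \<le> m \<Longrightarrow> sh v ` {0..<m} = {0..<Suc m} - {v}"
proof
  assume "v \<le> m"
  then show "sh v ` {0..<m} \<subseteq> {0..<Suc m} - {v}" by (auto simp: sh_def)
next
  assume vm: "v \<le> m"
  show "{0..<Suc m} - {v} \<subseteq> sh v ` {0..<m}"
  proof
    fix x assume x: "x \<in> {0..<Suc m} - {v}"
    have "sh v (ush v x) = x" using x sh_ush by auto
    moreover have "ush v x \<in> {0..<m}" using x vm by (auto simp: ush_def)
    ultimately show "x \<in> sh v ` {0..<m}" by (metis imageI)
  qed
qed

lemma set_sh: "set p = {0..<m} \<Longrightarrow> v \<le> m \<Longrightarrow> set (map (sh v) p) = {0..<Suc m} - {v}"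
  using sh_image by simp

lemma child_perm: "p \<in> permutations_of_set {0..<m} \<Longrightarrow> v \<le> m \<Longrightarrow> child v p \<in> permutations_of_set {0..<Suc m}"
  unfolding permutations_of_set_def child_def
  using set_sh[of p m v] inj_sh[of v] by (auto simp: distinct_map intro: inj_on_subset[OF inj_sh])

lemma inj_child: "inj (\<lambda>(p, v). child v p)"
proof (rule injI, clarify)
  fix p v p' v' assume h: "child v p = child v' p'"
  then have vv: "v = v'" by (simp add: child_def)
  then have "map (sh v) p = map (sh v) p'" using h by (simp add: child_def)
  then have "p = p'" using inj_sh[of v] by (simp add: inj_map_eq_map)
  then show "p = p' \<and> v = v'" using vv by simp
qed

lemma Av_Suc: "Av P (Suc m) = (\<lambda>(p, v). child v p) ` (SIGMA p:Av P m. {v. v \<le> m \<and> okslot P v (tl p)})"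
proof
  show "(\<lambda>(p, v). child v p) ` (SIGMA p:Av P m. {v. v \<le> m \<and> okslot P v (tl p)}) \<subseteq> Av P (Suc m)"
  proof (rule image_subsetI, clarify)
    fix p v assume h: "p \<in> Av P m" "v \<le> m" "okslot P v (tl p)"
    then have "p \<in> permutations_of_set {0..<m}" "gav P p" by (simp_all add: Av_def)
    then show "child v p \<in> Av P (Suc m)" using h child_perm[of p m v] gav_child[of P v p]
      by (simp add: Av_def)
  qed
next
  show "Av P (Suc m) \<subseteq> (\<lambda>(p, v). child v p) ` (SIGMA p:Av P m. {v. v \<le> m \<and> okslot P v (tl p)})"
  proof
    fix xs assume xs: "xs \<in> Av P (Suc m)"
    then have ps: "set xs = {0..<Suc m}" "distinct xs" "gav P xs" by (auto simp: Av_def permutations_of_set_def)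
    then obtain v r where xr: "xs = v # r" by (cases xs) auto
    have vm: "v \<le> m" using ps xr by auto
    have vr: "v \<notin> set r" using ps xr by auto
    define p where "p = map (ush v) r"
    have rp: "map (sh v) p = r" unfolding p_def using vr
      by (induction r) (auto simp: sh_ush)
    have cp: "child v p = xs" using rp xr by (simp add: child_def)
    have setr: "set r = {0..<Suc m} - {v}" using ps(1) xr vr by (auto simp del: atLeastLessThan_iff)
    have setp: "set p = {0..<m}"
    proof -
      have "set r = set (map (sh v) p)" using rp by simp
      moreover have "\<And>q. set (map (sh v) q) = sh v ` set q" by simp
      ultimately have "sh v ` set p = {0..<Suc m} - {v}" using setr by simp
      moreover have "sh v ` {0..<m} = {0..<Suc m} - {v}" using set_sh[of "[0..<m]" m v] vm by simp
      ultimately show ?thesis using inj_sh[of v] by (metis inj_image_eq_iff)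
    qed
    have dp: "distinct p"
      using ps xr rp by (metis distinct.simps(2) distinct_map)
    have gp: "gav P p" and okv: "okslot P v (tl p)" using ps cp gav_child by metis+
    have "p \<in> Av P m" using setp dp gp by (auto simp: Av_def permutations_of_set_def)
    then show "xs \<in> (\<lambda>(p, v). child v p) ` (SIGMA p:Av P m. {v. v \<le> m \<and> okslot P v (tl p)})"
      using cp vm okv by (auto intro!: image_eqI[of _ _ "(p, v)"])
  qed
qed



definition kk :: "pat \<Rightarrow> nat list \<Rightarrow> nat" where
  "kk P p = card {v. v \<le> length p \<and> okslot P v (tl p)}"
definition bb :: "pat \<Rightarrow> nat list \<Rightarrow> nat" where
  "bb P p = card {v. v \<le> length p \<and> okslot P v p}"
definition lab :: "pat \<Rightarrow> nat list \<Rightarrow> nat \<times> nat" where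
  "lab P p = (kk P p, bb P p)"
definition R :: "nat \<times> nat \<Rightarrow> (nat \<times> nat) multiset" where
  "R kb = replicate_mset (fst kb - snd kb) (snd kb, snd kb) +
          image_mset (Pair (Suc (snd kb))) (mset_set {2..<snd kb + 2})"
primrec T :: "nat \<Rightarrow> (nat \<times> nat) multiset" where
  "T 0 = {#(1,1)#}"
| "T (Suc m) = sum_mset (image_mset R (T m))"
definition LM :: "pat \<Rightarrow> nat \<Rightarrow> (nat \<times> nat) multiset" where
  "LM P m = image_mset (lab P) (mset_set (Av P m))"

definition good :: "pat \<Rightarrow> bool" where
  "good P \<longleftrightarrow> (\<forall>m p. p \<in> permutations_of_set {0..<m} \<longrightarrow>
      inj_on (\<lambda>v. bb P (child v p)) {v. v \<le> m \<and> okslot P v p} \<and>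
      (\<lambda>v. bb P (child v p)) ` {v. v \<le> m \<and> okslot P v p} = {2..<card {v. v \<le> m \<and> okslot P v p} + 2} \<and>
      (\<forall>v. v \<le> m \<and> okslot P v (tl p) \<and> \<not> okslot P v p \<longrightarrow> bb P (child v p) = card {v. v \<le> m \<and> okslot P v p}))"

lemma card_us:
  assumes "v \<le> m"
  shows "card {w. w \<le> Suc m \<and> Q (us v w)} = card {u. u \<le> m \<and> Q u} + (if Q v then 1 else 0)"
proof -
  have e1: "{w. w \<le> Suc m \<and> Q (us v w)} = {w. w \<le> v \<and> Q w} \<union> Suc ` {u. v \<le> u \<and> u \<le> m \<and> Q u}"
  proof (rule set_eqI)
    fix w
    show "w \<in> {w. w \<le> Suc m \<and> Q (us v w)} \<longleftrightarrow> w \<in> {w. w \<le> v \<and> Q w} \<union> Suc ` {u. v \<le> u \<and> u \<le> m \<and> Q u}"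
    proof (cases "w \<le> v")
      case True then show ?thesis using assms by (auto simp: us_def)
    next
      case False
      then obtain u where "w = Suc u" "v \<le> u" by (cases w) auto
      then show ?thesis using False by (auto simp: us_def)
    qed
  qed
  have c1: "card {w. w \<le> Suc m \<and> Q (us v w)} = card {w. w \<le> v \<and> Q w} + card {u. v \<le> u \<and> u \<le> m \<and> Q u}"
    unfolding e1 by (subst card_Un_disjoint) (auto simp: card_image)
  have e2: "{u. u \<le> m \<and> Q u} = {w. w \<le> v \<and> Q w} \<union> {u. v < u \<and> u \<le> m \<and> Q u}"
    using assms by auto
  have c2: "card {u. u \<le> m \<and> Q u} = card {w. w \<le> v \<and> Q w} + card {u. v < u \<and> u \<le> m \<and> Q u}"
    unfolding e2 by (subst card_Un_disjoint) auto
  have e3: "{u. v \<le> u \<and> u \<le> m \<and> Q u} = (if Q v then {v} else {}) \<union> {u. v < u \<and> u \<le> m \<and> Q u}"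
    using assms by (auto simp: le_less)
  have c3: "card {u. v \<le> u \<and> u \<le> m \<and> Q u} = (if Q v then 1 else 0) + card {u. v < u \<and> u \<le> m \<and> Q u}"
    unfolding e3 by (subst card_Un_disjoint) auto
  show ?thesis using c1 c2 c3 by simp
qed

lemma kk_child:
  assumes "p \<in> permutations_of_set {0..<m}" "v \<le> m"
  shows "kk P (child v p) = bb P p + (if okslot P v p then 1 else 0)"
proof -
  have lp: "length p = m" using assms(1) length_finite_permutations_of_set by fastforce
  show ?thesis unfolding kk_def bb_def child_def using lp assms(2)
    using card_us[of v m "\<lambda>u. okslot P u p"] by (simp add: okslot_sh)
qed

lemma children_labels:
  assumes g: "good P" and p: "p \<in> permutations_of_set {0..<m}"
  shows "image_mset (\<lambda>v. lab P (child v p)) (mset_set {v. v \<le> m \<and> okslot P v (tl p)}) = R (lab P p)"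
proof -
  define A where "A = {v. v \<le> m \<and> okslot P v p}"
  define V where "V = {v. v \<le> m \<and> okslot P v (tl p)}"
  define h where "h = (\<lambda>v. bb P (child v p))"
  have lp: "length p = m" using p length_finite_permutations_of_set by fastforce
  have AV: "A \<subseteq> V" unfolding A_def V_def using okslot_tl by blast
  have fin: "finite A" "finite V" unfolding A_def V_def by auto
  have G: "inj_on h A" "h ` A = {2..<card A + 2}" "\<forall>v\<in>V - A. h v = card A"
    using g p unfolding good_def A_def V_def h_def by blast+
  have bbA: "bb P p = card A" unfolding bb_def A_def lp ..
  have kkV: "kk P p = card V" unfolding kk_def V_def lp ..
  have splitV: "mset_set V = mset_set A + mset_set (V - A)"
    using AV fin mset_set_Union[of A "V - A"] by (simp add: Un_absorb1 Un_Diff_cancel)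
  have partA: "image_mset (\<lambda>v. lab P (child v p)) (mset_set A) = image_mset (Pair (Suc (card A))) (mset_set {2..<card A + 2})"
  proof -
    have "image_mset (\<lambda>v. lab P (child v p)) (mset_set A) = image_mset (\<lambda>v. (Suc (card A), h v)) (mset_set A)"
    proof (rule image_mset_cong)
      fix v assume "v \<in># mset_set A"
      then have "v \<in> A" using fin by simp
      then show "lab P (child v p) = (Suc (card A), h v)"
        using kk_child[OF p, of v P] bbA unfolding lab_def h_def A_def by simp
    qed
    also have "\<dots> = image_mset (Pair (Suc (card A))) (image_mset h (mset_set A))"
      by (simp add: image_mset.compositionality o_def)
    also have "image_mset h (mset_set A) = mset_set {2..<card A + 2}"
      using image_mset_mset_set[OF G(1)] G(2) by simp
    finally show ?thesis .
  qed
  have partV: "image_mset (\<lambda>v. lab P (child v p)) (mset_set (V - A)) = replicate_mset (card V - card A) (card A, card A)"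
  proof -
    have "image_mset (\<lambda>v. lab P (child v p)) (mset_set (V - A)) = image_mset (\<lambda>v. (card A, card A)) (mset_set (V - A))"
    proof (rule image_mset_cong)
      fix v assume "v \<in># mset_set (V - A)"
      then have "v \<in> V - A" using fin by simp
      then show "lab P (child v p) = (card A, card A)"
        using kk_child[OF p, of v P] bbA G(3) unfolding lab_def h_def A_def V_def by simp
    qed
    also have "\<dots> = replicate_mset (card (V - A)) (card A, card A)"
      by (simp only: image_mset_const_eq size_mset_set)
    also have "card (V - A) = card V - card A" using AV fin by (simp add: card_Diff_subset)
    finally show ?thesis .
  qed
  show ?thesis
    unfolding V_def[symmetric] splitV image_mset_union partA partV
    by (simp add: R_def lab_def bbA kkV add.commute)
qed

lemma mset_set_Sigma:
  assumes "finite I" "\<forall>i\<in>I. finite (B i)"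
  shows "mset_set (Sigma I B) = (\<Sum>i\<in>I. image_mset (Pair i) (mset_set (B i)))"
  using assms
proof (induction I rule: finite_induct)
  case empty then show ?case by simp
next
  case (insert x F)
  have "Sigma (insert x F) B = Pair x ` B x \<union> Sigma F B" by auto
  moreover have "Pair x ` B x \<inter> Sigma F B = {}" using insert by auto
  moreover have "finite (Sigma F B)" using insert by auto
  ultimately have "mset_set (Sigma (insert x F) B) = mset_set (Pair x ` B x) + mset_set (Sigma F B)"
    using insert by (simp add: mset_set_Union)
  also have "mset_set (Pair x ` B x) = image_mset (Pair x) (mset_set (B x))"
    by (rule image_mset_mset_set[symmetric]) (simp add: inj_on_def)
  finally show ?case using insert by simp
qed

lemma image_mset_sum: "finite I \<Longrightarrow> image_mset f (\<Sum>i\<in>I. M i) = (\<Sum>i\<in>I. image_mset f (M i))"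
  by (induction I rule: finite_induct) auto

lemma finite_Av: "finite (Av P m)"
  unfolding Av_def by simp

lemma LM_Suc:
  assumes g: "good P"
  shows "LM P (Suc m) = sum_mset (image_mset R (LM P m))"
proof -
  define V where "V = (\<lambda>p. {v. v \<le> m \<and> okslot P v (tl p)})"
  have "LM P (Suc m) = image_mset (lab P) (mset_set ((\<lambda>(p, v). child v p) ` (SIGMA p:Av P m. V p)))"
    unfolding LM_def Av_Suc V_def ..
  also have "mset_set ((\<lambda>(p, v). child v p) ` (SIGMA p:Av P m. V p)) = image_mset (\<lambda>(p, v). child v p) (mset_set (SIGMA p:Av P m. V p))"
    by (rule image_mset_mset_set[symmetric]) (rule inj_on_subset[OF inj_child], simp)
  also have "mset_set (SIGMA p:Av P m. V p) = (\<Sum>p\<in>Av P m. image_mset (Pair p) (mset_set (V p)))"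
    by (rule mset_set_Sigma) (auto simp: finite_Av V_def)
  finally have "LM P (Suc m) = image_mset (lab P) (image_mset (\<lambda>(p, v). child v p) (\<Sum>p\<in>Av P m. image_mset (Pair p) (mset_set (V p))))" .
  also have "\<dots> = (\<Sum>p\<in>Av P m. image_mset (\<lambda>v. lab P (child v p)) (mset_set (V p)))"
    by (simp add: image_mset_sum finite_Av image_mset.compositionality o_def)
  also have "\<dots> = (\<Sum>p\<in>Av P m. R (lab P p))"
  proof (rule sum.cong[OF refl])
    fix p assume "p \<in> Av P m"
    then have "p \<in> permutations_of_set {0..<m}" by (simp add: Av_def)
    then show "image_mset (\<lambda>v. lab P (child v p)) (mset_set (V p)) = R (lab P p)"
      unfolding V_def by (rule children_labels[OF g])
  qed
  also have "\<dots> = sum_mset (image_mset R (LM P m))"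
    unfolding LM_def sum_unfold_sum_mset by (simp add: image_mset.compositionality o_def)
  finally show ?thesis .
qed

lemma LM_0: "LM P 0 = {#(1,1)#}"
proof -
  have "Av P 0 = {[]}" by (auto simp: Av_def)
  moreover have "lab P [] = (1,1)" by (simp add: lab_def kk_def bb_def okslot_def)
  ultimately show ?thesis by (simp add: LM_def)
qed

lemma LM_T: "good P \<Longrightarrow> LM P m = T m"
  by (induction m) (simp_all add: LM_0 LM_Suc)

lemma card_Av_good: "good P \<Longrightarrow> card (Av P m) = size (T m)"
proof -
  assume "good P"
  then have "size (LM P m) = size (T m)" by (simp add: LM_T)
  then show ?thesis by (simp add: LM_def)
qed



lemma bb_child_gen:
  assumes p: "p \<in> permutations_of_set {0..<m}" and vm: "v \<le> m"
  shows "bb P (child v p) = card {w. w \<le> Suc m \<and> okslot P (us v w) p \<and>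
            \<not>(\<exists>y. y \<le> m \<and> y \<noteq> v \<and> P (w \<le> v) (w \<le> y) (v < y))}"
proof -
  have lp: "length p = m" using p length_finite_permutations_of_set by fastforce
  have sp: "set p = {0..<m}" using p by (simp add: permutations_of_set_def)
  have ss: "set (map (sh v) p) = {0..<Suc m} - {v}" using set_sh[OF sp vm] .
  have "\<And>w. okslot P w (child v p) \<longleftrightarrow> okslot P (us v w) p \<and>
            \<not>(\<exists>y. y \<le> m \<and> y \<noteq> v \<and> P (w \<le> v) (w \<le> y) (v < y))"
  proof -
    fix w
    have "(\<exists>y\<in>set (map (sh v) p). P (w \<le> v) (w \<le> y) (v < y)) \<longleftrightarrow> (\<exists>y. y \<le> m \<and> y \<noteq> v \<and> P (w \<le> v) (w \<le> y) (v < y))"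
      unfolding ss by (auto simp: less_Suc_eq_le)
    then show "okslot P w (child v p) \<longleftrightarrow> okslot P (us v w) p \<and>
            \<not>(\<exists>y. y \<le> m \<and> y \<noteq> v \<and> P (w \<le> v) (w \<le> y) (v < y))"
      unfolding child_def okslot_cons okslot_sh by blast
  qed
  moreover have "length (child v p) = Suc m" using lp by (simp add: child_def)
  ultimately show ?thesis unfolding bb_def by simp
qed

lemma ok_top:
  assumes "p \<in> permutations_of_set {0..<m}" "\<And>c. \<not> P False False c"
  shows "okslot P m p"
proof -
  have *: "\<And>i. i < length p \<Longrightarrow> p ! i < m" using assms(1) by (auto simp: permutations_of_set_def dest: nth_mem)
  show ?thesis unfolding okslot_def
  proof clarify
    fix i j assume h: "i < j" "j < length p" "P (m \<le> p!i) (m \<le> p!j) (p!i < p!j)"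
    have "\<not> m \<le> p!i" "\<not> m \<le> p!j" using *[of i] *[of j] h by simp_all
    then show False using h(3) assms(2) by simp
  qed
qed

lemma cardge_bij:
  assumes "finite (A::nat set)"
  shows "inj_on (\<lambda>v. card {u\<in>A. v \<le> u}) A \<and> (\<lambda>v. card {u\<in>A. v \<le> u}) ` A = {1..card A}"
proof -
  let ?g = "\<lambda>v. card {u\<in>A. v \<le> u}"
  have lt: "?g w < ?g v" if "v \<in> A" "w \<in> A" "v < w" for v w
  proof (rule psubset_card_mono)
    show "finite {u\<in>A. v \<le> u}" using assms by simp
    have "v \<in> {u\<in>A. v \<le> u}" "v \<notin> {u\<in>A. w \<le> u}" "{u\<in>A. w \<le> u} \<subseteq> {u\<in>A. v \<le> u}" using that by auto
    then show "{u\<in>A. w \<le> u} \<subset> {u\<in>A. v \<le> u}" by blast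
  qed
  have inj: "inj_on ?g A"
  proof (rule inj_onI)
    fix v w assume "v \<in> A" "w \<in> A" "?g v = ?g w"
    then show "v = w" using lt[of v w] lt[of w v] by (cases v w rule: linorder_cases) auto
  qed
  have sub: "?g ` A \<subseteq> {1..card A}"
  proof
    fix x assume "x \<in> ?g ` A"
    then obtain v where v: "v \<in> A" "x = ?g v" by blast
    have "v \<in> {u\<in>A. v \<le> u}" using v by simp
    then have "{u\<in>A. v \<le> u} \<noteq> {}" by blast
    then have "?g v > 0" using assms by (simp add: card_gt_0_iff)
    then have "?g v \<ge> 1" by simp
    moreover have "?g v \<le> card A" using assms by (intro card_mono) blast+
    ultimately show "x \<in> {1..card A}" using v by simp
  qed
  have "card (?g ` A) = card {1..card A}" using inj by (simp add: card_image)
  then have "?g ` A = {1..card A}" using card_subset_eq[OF finite_atLeastAtMost sub] by blast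
  then show ?thesis using inj by simp
qed

lemma cardle_bij:
  assumes "finite (A::nat set)"
  shows "inj_on (\<lambda>v. card {u\<in>A. u \<le> v}) A \<and> (\<lambda>v. card {u\<in>A. u \<le> v}) ` A = {1..card A}"
proof -
  let ?g = "\<lambda>v. card {u\<in>A. u \<le> v}"
  have lt: "?g v < ?g w" if "v \<in> A" "w \<in> A" "v < w" for v w
  proof (rule psubset_card_mono)
    show "finite {u\<in>A. u \<le> w}" using assms by simp
    have "w \<in> {u\<in>A. u \<le> w}" "w \<notin> {u\<in>A. u \<le> v}" "{u\<in>A. u \<le> v} \<subseteq> {u\<in>A. u \<le> w}" using that by auto
    then show "{u\<in>A. u \<le> v} \<subset> {u\<in>A. u \<le> w}" by blast
  qed
  have inj: "inj_on ?g A"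
  proof (rule inj_onI)
    fix v w assume "v \<in> A" "w \<in> A" "?g v = ?g w"
    then show "v = w" using lt[of v w] lt[of w v] by (cases v w rule: linorder_cases) auto
  qed
  have sub: "?g ` A \<subseteq> {1..card A}"
  proof
    fix x assume "x \<in> ?g ` A"
    then obtain v where v: "v \<in> A" "x = ?g v" by blast
    have "v \<in> {u\<in>A. u \<le> v}" using v by simp
    then have "{u\<in>A. u \<le> v} \<noteq> {}" by blast
    then have "?g v > 0" using assms by (simp add: card_gt_0_iff)
    then have "?g v \<ge> 1" by simp
    moreover have "?g v \<le> card A" using assms by (intro card_mono) blast+
    ultimately show "x \<in> {1..card A}" using v by simp
  qed
  have "card (?g ` A) = card {1..card A}" using inj by (simp add: card_image)
  then have "?g ` A = {1..card A}" using card_subset_eq[OF finite_atLeastAtMost sub] by blast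
  then show ?thesis using inj by simp
qed



definition P1 :: pat where "P1 = (\<lambda>a b c. a \<and> c)"
definition P2 :: pat where "P2 = (\<lambda>a b c. b \<and> \<not> c)"
definition P3 :: pat where "P3 = (\<lambda>a b c. \<not> a \<and> b)"

lemma shift_bij:
  assumes "inj_on g A" "g ` A = {1..card A}" "\<forall>v\<in>A. h v = Suc (g v)"
  shows "inj_on h A \<and> h ` A = {2..<card A + 2}"
proof
  show "inj_on h A" using assms(1,3) by (auto simp: inj_on_def)
  have "h ` A = Suc ` g ` A" using assms(3) by (auto simp: image_iff)
  also have "\<dots> = Suc ` {1..card A}" using assms(2) by simp
  also have "\<dots> = {2..<card A + 2}" by (auto simp: image_iff)
  finally show "h ` A = {2..<card A + 2}" .
qed

lemma finA: "finite {v::nat. v \<le> m \<and> Q v}" by simp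

lemma P1_mono: "okslot P1 u p \<Longrightarrow> u \<le> u' \<Longrightarrow> okslot P1 u' p"
  unfolding okslot_def P1_def by (meson order.trans)

lemma P1_bb:
  assumes p: "p \<in> permutations_of_set {0..<m}" and vm: "v \<le> m"
  shows "bb P1 (child v p) = (if v = m then card {u. u \<le> m \<and> okslot P1 u p} + 1
           else card {u\<in>{u. u \<le> m \<and> okslot P1 u p}. v \<le> u})"
proof -
  have ex: "(\<exists>y. y \<le> m \<and> y \<noteq> v \<and> P1 (w \<le> v) (w \<le> y) (v < y)) \<longleftrightarrow> w \<le> v \<and> v < m" for w
    unfolding P1_def using vm by (auto intro: exI[of _ m])
  have b: "bb P1 (child v p) = card {w. w \<le> Suc m \<and> okslot P1 (us v w) p \<and> \<not>(w \<le> v \<and> v < m)}"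
    unfolding bb_child_gen[OF p vm] ex ..
  show ?thesis
  proof (cases "v = m")
    case True
    have "okslot P1 m p" by (rule ok_top[OF p]) (simp add: P1_def)
    then show ?thesis unfolding b using True card_us[of m m "\<lambda>u. okslot P1 u p"] by simp
  next
    case False
    have "{w. w \<le> Suc m \<and> okslot P1 (us v w) p \<and> \<not>(w \<le> v \<and> v < m)} = Suc ` {u\<in>{u. u \<le> m \<and> okslot P1 u p}. v \<le> u}"
    proof (rule set_eqI)
      fix w
      show "w \<in> {w. w \<le> Suc m \<and> okslot P1 (us v w) p \<and> \<not>(w \<le> v \<and> v < m)} \<longleftrightarrow> w \<in> Suc ` {u\<in>{u. u \<le> m \<and> okslot P1 u p}. v \<le> u}"
      proof (cases w)
        case 0 then show ?thesis using False vm by auto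
      next
        case (Suc u) then show ?thesis using False vm by (auto simp: us_def)
      qed
    qed
    then show ?thesis unfolding b using False by (simp add: card_image)
  qed
qed

lemma good_P1: "good P1"
  unfolding good_def
proof (intro allI impI)
  fix m :: nat and p :: "nat list" assume p: "p \<in> permutations_of_set {0..<m}"
  define A where "A = {v. v \<le> m \<and> okslot P1 v p}"
  define g where "g = (\<lambda>v. card {u\<in>A. v \<le> u})"
  have fA: "finite A" unfolding A_def by simp
  have mA: "m \<in> A" unfolding A_def using ok_top[OF p, of P1] by (simp add: P1_def)
  have Am: "\<And>u. u \<in> A \<Longrightarrow> u \<le> m" unfolding A_def by simp
  have G: "inj_on g A" "g ` A = {1..card A}" using cardge_bij[OF fA] unfolding g_def by auto
  have gm: "g m = 1"
  proof -
    have "{u\<in>A. m \<le> u} = {m}" using mA Am by (auto intro: antisym)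
    then show ?thesis by (simp add: g_def)
  qed
  have hv: "bb P1 (child v p) = (if v = m then card A + 1 else g v)" if "v \<in> A" for v
  proof -
    have "v \<le> m" using that by (rule Am)
    then show ?thesis unfolding g_def A_def by (rule P1_bb[OF p])
  qed
  have gne: "\<And>v. v \<in> A \<Longrightarrow> v \<noteq> m \<Longrightarrow> g v \<in> {2..card A}"
  proof -
    fix v assume v: "v \<in> A" "v \<noteq> m"
    have "g v \<noteq> 1" using G(1) v mA gm by (metis inj_on_eq_iff)
    moreover have "g v \<in> {1..card A}" using G(2) v by blast
    ultimately show "g v \<in> {2..card A}" by auto
  qed
  have inj: "inj_on (\<lambda>v. bb P1 (child v p)) A"
  proof (rule inj_onI)
    fix v w assume vw: "v \<in> A" "w \<in> A" "bb P1 (child v p) = bb P1 (child w p)"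
    show "v = w"
    proof (cases "v = m"; cases "w = m")
      assume "v = m" "w = m" then show ?thesis by simp
    next
      assume "v = m" "w \<noteq> m" then show ?thesis using vw hv gne[of w] by auto
    next
      assume "v \<noteq> m" "w = m" then show ?thesis using vw hv gne[of v] by auto
    next
      assume "v \<noteq> m" "w \<noteq> m" then show ?thesis using vw hv G(1) by (auto simp: inj_on_eq_iff)
    qed
  qed
  have img: "(\<lambda>v. bb P1 (child v p)) ` A = {2..<card A + 2}"
  proof
    show "(\<lambda>v. bb P1 (child v p)) ` A \<subseteq> {2..<card A + 2}"
    proof (rule image_subsetI)
      fix v assume v: "v \<in> A"
      show "bb P1 (child v p) \<in> {2..<card A + 2}"
      proof (cases "v = m")
        case True
        have "card A > 0" using mA fA card_gt_0_iff by blast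
        then show ?thesis using hv[OF v] True by simp
      next
        case False then show ?thesis using hv[OF v] gne[OF v False] by simp
      qed
    qed
    show "{2..<card A + 2} \<subseteq> (\<lambda>v. bb P1 (child v p)) ` A"
    proof
      fix x assume x: "x \<in> {2..<card A + 2}"
      show "x \<in> (\<lambda>v. bb P1 (child v p)) ` A"
      proof (cases "x = card A + 1")
        case True then show ?thesis using hv mA by (metis image_eqI)
      next
        case False
        then have "x \<in> {1..card A}" using x by auto
        then obtain v where v: "v \<in> A" "g v = x" using G(2) by (metis imageE)
        then have "v \<noteq> m" using gm x by auto
        then show ?thesis using v hv by (metis image_eqI)
      qed
    qed
  qed
  have rest: "\<forall>v. v \<le> m \<and> okslot P1 v (tl p) \<and> \<not> okslot P1 v p \<longrightarrow> bb P1 (child v p) = card A"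
  proof (intro allI impI)
    fix v assume v: "v \<le> m \<and> okslot P1 v (tl p) \<and> \<not> okslot P1 v p"
    then have "v \<noteq> m" using mA unfolding A_def by auto
    moreover have "{u\<in>A. v \<le> u} = A"
    proof -
      have "\<And>u. u \<in> A \<Longrightarrow> v \<le> u"
      proof (rule ccontr)
        fix u assume "u \<in> A" "\<not> v \<le> u"
        then have "okslot P1 v p" using P1_mono unfolding A_def by auto
        then show False using v by simp
      qed
      then show ?thesis by auto
    qed
    ultimately show "bb P1 (child v p) = card A" using P1_bb[OF p] v unfolding A_def by simp
  qed
  show "inj_on (\<lambda>v. bb P1 (child v p)) {v. v \<le> m \<and> okslot P1 v p} \<and>
       (\<lambda>v. bb P1 (child v p)) ` {v. v \<le> m \<and> okslot P1 v p} = {2..<card {v. v \<le> m \<and> okslot P1 v p} + 2} \<and>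
       (\<forall>v. v \<le> m \<and> okslot P1 v (tl p) \<and> \<not> okslot P1 v p \<longrightarrow> bb P1 (child v p) = card {v. v \<le> m \<and> okslot P1 v p})"
    using inj img rest unfolding A_def by blast
qed



lemma P2_mono: "okslot P2 u p \<Longrightarrow> u \<le> u' \<Longrightarrow> okslot P2 u' p"
  unfolding okslot_def P2_def by (meson order.trans)

lemma P2_bb:
  assumes p: "p \<in> permutations_of_set {0..<m}" and vm: "v \<le> m"
  shows "bb P2 (child v p) = (if okslot P2 v p then 1 else 0) + card {u\<in>{u. u \<le> m \<and> okslot P2 u p}. v \<le> u}"
proof -
  have ex: "(\<exists>y. y \<le> m \<and> y \<noteq> v \<and> P2 (w \<le> v) (w \<le> y) (v < y)) \<longleftrightarrow> w < v" for w
  proof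
    assume "\<exists>y. y \<le> m \<and> y \<noteq> v \<and> P2 (w \<le> v) (w \<le> y) (v < y)"
    then show "w < v" unfolding P2_def by auto
  next
    assume "w < v"
    then show "\<exists>y. y \<le> m \<and> y \<noteq> v \<and> P2 (w \<le> v) (w \<le> y) (v < y)"
      unfolding P2_def using vm by (intro exI[of _ "v - 1"]) auto
  qed
  have b: "bb P2 (child v p) = card {w. w \<le> Suc m \<and> okslot P2 (us v w) p \<and> \<not> w < v}"
    unfolding bb_child_gen[OF p vm] ex ..
  have e: "{w. w \<le> Suc m \<and> okslot P2 (us v w) p \<and> \<not> w < v} =
      (if okslot P2 v p then {v} else {}) \<union> Suc ` {u\<in>{u. u \<le> m \<and> okslot P2 u p}. v \<le> u}"
  proof (rule set_eqI)
    fix w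
    show "w \<in> {w. w \<le> Suc m \<and> okslot P2 (us v w) p \<and> \<not> w < v} \<longleftrightarrow>
      w \<in> (if okslot P2 v p then {v} else {}) \<union> Suc ` {u\<in>{u. u \<le> m \<and> okslot P2 u p}. v \<le> u}"
    proof (cases "w = v")
      case True then show ?thesis using vm by (auto simp: us_def)
    next
      case False
      show ?thesis
      proof (cases w)
        case 0 then show ?thesis using False by auto
      next
        case (Suc u) then show ?thesis using False vm by (auto simp: us_def)
      qed
    qed
  qed
  show ?thesis unfolding b e
    by (subst card_Un_disjoint) (auto simp: card_image)
qed

lemma good_P2: "good P2"
  unfolding good_def
proof (intro allI impI)
  fix m :: nat and p :: "nat list" assume p: "p \<in> permutations_of_set {0..<m}"
  define A where "A = {v. v \<le> m \<and> okslot P2 v p}"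
  define g where "g = (\<lambda>v. card {u\<in>A. v \<le> u})"
  have fA: "finite A" unfolding A_def by simp
  have Am: "\<And>u. u \<in> A \<Longrightarrow> u \<le> m" unfolding A_def by simp
  have G: "inj_on g A" "g ` A = {1..card A}" using cardge_bij[OF fA] unfolding g_def by auto
  have hv: "bb P2 (child v p) = (if okslot P2 v p then 1 else 0) + g v" if "v \<le> m" for v
    unfolding g_def A_def using that by (rule P2_bb[OF p])
  have hA: "\<forall>v\<in>A. bb P2 (child v p) = Suc (g v)"
  proof
    fix v assume "v \<in> A"
    then have "v \<le> m" "okslot P2 v p" unfolding A_def by auto
    then show "bb P2 (child v p) = Suc (g v)" using hv by simp
  qed
  have ii: "inj_on (\<lambda>v. bb P2 (child v p)) A \<and> (\<lambda>v. bb P2 (child v p)) ` A = {2..<card A + 2}"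
    by (rule shift_bij[OF G hA])
  have rest: "\<forall>v. v \<le> m \<and> okslot P2 v (tl p) \<and> \<not> okslot P2 v p \<longrightarrow> bb P2 (child v p) = card A"
  proof (intro allI impI)
    fix v assume v: "v \<le> m \<and> okslot P2 v (tl p) \<and> \<not> okslot P2 v p"
    have "{u\<in>A. v \<le> u} = A"
    proof -
      have "\<And>u. u \<in> A \<Longrightarrow> v \<le> u"
      proof (rule ccontr)
        fix u assume "u \<in> A" "\<not> v \<le> u"
        then have "okslot P2 v p" using P2_mono unfolding A_def by auto
        then show False using v by simp
      qed
      then show ?thesis by auto
    qed
    then show "bb P2 (child v p) = card A" using hv v unfolding g_def by simp
  qed
  show "inj_on (\<lambda>v. bb P2 (child v p)) {v. v \<le> m \<and> okslot P2 v p} \<and>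
       (\<lambda>v. bb P2 (child v p)) ` {v. v \<le> m \<and> okslot P2 v p} = {2..<card {v. v \<le> m \<and> okslot P2 v p} + 2} \<and>
       (\<forall>v. v \<le> m \<and> okslot P2 v (tl p) \<and> \<not> okslot P2 v p \<longrightarrow> bb P2 (child v p) = card {v. v \<le> m \<and> okslot P2 v p})"
    using ii rest unfolding A_def by blast
qed

lemma P3_bb:
  assumes p: "p \<in> permutations_of_set {0..<m}" and vm: "v \<le> m"
  shows "bb P3 (child v p) = card {u\<in>{u. u \<le> m \<and> okslot P3 u p}. u \<le> v} + 1"
proof -
  have ex: "(\<exists>y. y \<le> m \<and> y \<noteq> v \<and> P3 (w \<le> v) (w \<le> y) (v < y)) \<longleftrightarrow> v < w \<and> w \<le> m" for w
  proof
    assume "\<exists>y. y \<le> m \<and> y \<noteq> v \<and> P3 (w \<le> v) (w \<le> y) (v < y)"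
    then show "v < w \<and> w \<le> m" unfolding P3_def by auto
  next
    assume "v < w \<and> w \<le> m"
    then show "\<exists>y. y \<le> m \<and> y \<noteq> v \<and> P3 (w \<le> v) (w \<le> y) (v < y)"
      unfolding P3_def by (intro exI[of _ w]) auto
  qed
  have okm: "okslot P3 m p" by (rule ok_top[OF p]) (simp add: P3_def)
  have b: "bb P3 (child v p) = card {w. w \<le> Suc m \<and> okslot P3 (us v w) p \<and> \<not> (v < w \<and> w \<le> m)}"
    unfolding bb_child_gen[OF p vm] ex ..
  have e: "{w. w \<le> Suc m \<and> okslot P3 (us v w) p \<and> \<not> (v < w \<and> w \<le> m)} =
      {u\<in>{u. u \<le> m \<and> okslot P3 u p}. u \<le> v} \<union> {Suc m}"
  proof (rule set_eqI)
    fix w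
    show "w \<in> {w. w \<le> Suc m \<and> okslot P3 (us v w) p \<and> \<not> (v < w \<and> w \<le> m)} \<longleftrightarrow>
      w \<in> {u\<in>{u. u \<le> m \<and> okslot P3 u p}. u \<le> v} \<union> {Suc m}"
    proof (cases "w \<le> v")
      case True then show ?thesis using vm by (auto simp: us_def)
    next
      case False then show ?thesis using vm okm by (auto simp: us_def)
    qed
  qed
  show ?thesis unfolding b e
    using vm by (subst card_Un_disjoint) auto
qed

lemma good_P3: "good P3"
  unfolding good_def
proof (intro allI impI)
  fix m :: nat and p :: "nat list" assume p: "p \<in> permutations_of_set {0..<m}"
  define A where "A = {v. v \<le> m \<and> okslot P3 v p}"
  define g where "g = (\<lambda>v. card {u\<in>A. u \<le> v})"
  have fA: "finite A" unfolding A_def by simp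
  have mA: "m \<in> A" unfolding A_def using ok_top[OF p, of P3] by (simp add: P3_def)
  have Am: "\<And>u. u \<in> A \<Longrightarrow> u \<le> m" unfolding A_def by simp
  have G: "inj_on g A" "g ` A = {1..card A}" using cardle_bij[OF fA] unfolding g_def by auto
  have hv: "bb P3 (child v p) = g v + 1" if "v \<le> m" for v
    unfolding g_def A_def using that by (rule P3_bb[OF p])
  have hA: "\<forall>v\<in>A. bb P3 (child v p) = Suc (g v)"
    using hv Am by simp
  have ii: "inj_on (\<lambda>v. bb P3 (child v p)) A \<and> (\<lambda>v. bb P3 (child v p)) ` A = {2..<card A + 2}"
    by (rule shift_bij[OF G hA])
  have rest: "\<forall>v. v \<le> m \<and> okslot P3 v (tl p) \<and> \<not> okslot P3 v p \<longrightarrow> bb P3 (child v p) = card A"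
  proof (intro allI impI)
    fix v assume v: "v \<le> m \<and> okslot P3 v (tl p) \<and> \<not> okslot P3 v p"
    obtain x r where pxr: "p = x # r" using v by (cases p) (auto simp: okslot_def)
    have "\<exists>y\<in>set r. P3 (v \<le> x) (v \<le> y) (x < y)" using v pxr okslot_cons[of P3 v x r] by auto
    then have xv: "x < v" unfolding P3_def by auto
    have sp: "set p = {0..<m}" using p by (simp add: permutations_of_set_def)
    have dp: "distinct p" using p by (simp add: permutations_of_set_def)
    have big: "{u\<in>A. v < u} = {m}"
    proof
      have "v \<noteq> m" using mA v unfolding A_def by auto
      then show "{m} \<subseteq> {u\<in>A. v < u}" using mA v by auto
      show "{u\<in>A. v < u} \<subseteq> {m}"
      proof
        fix u assume u: "u \<in> {u\<in>A. v < u}"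
        show "u \<in> {m}"
        proof (rule ccontr)
          assume "u \<notin> {m}"
          then have um: "u < m" using u Am by force
          then have "m - 1 \<in> set p" using sp by auto
          moreover have "m - 1 \<noteq> x" using um xv u by auto
          ultimately have "m - 1 \<in> set r" using pxr by auto
          moreover have "P3 (u \<le> x) (u \<le> m - 1) (x < m - 1)" unfolding P3_def using um xv u by auto
          ultimately have "\<not> okslot P3 u p" using pxr okslot_cons[of P3 u x r] by blast
          then show False using u unfolding A_def by auto
        qed
      qed
    qed
    have "A = {u\<in>A. u \<le> v} \<union> {u\<in>A. v < u}" by auto
    then have "card A = card {u\<in>A. u \<le> v} + card {u\<in>A. v < u}"
      using fA by (metis (no_types, lifting) card_Un_disjoint finite_Un disjoint_iff mem_Collect_eq not_le)
    then have "card A = g v + 1" using big unfolding g_def by simp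
    then show "bb P3 (child v p) = card A" using hv v by simp
  qed
  show "inj_on (\<lambda>v. bb P3 (child v p)) {v. v \<le> m \<and> okslot P3 v p} \<and>
       (\<lambda>v. bb P3 (child v p)) ` {v. v \<le> m \<and> okslot P3 v p} = {2..<card {v. v \<le> m \<and> okslot P3 v p} + 2} \<and>
       (\<forall>v. v \<le> m \<and> okslot P3 v (tl p) \<and> \<not> okslot P3 v p \<longrightarrow> bb P3 (child v p) = card {v. v \<le> m \<and> okslot P3 v p})"
    using ii rest unfolding A_def by blast
qed



lemma Av_compl:
  "card (Av (\<lambda>a b c. P (\<not>a) (\<not>b) (\<not>c)) m) = card (Av P m)"
proof -
  define f where "f = (\<lambda>x::nat. m - 1 - x)"
  have ff: "\<And>x. x < m \<Longrightarrow> f (f x) = x" "\<And>x. x < m \<Longrightarrow> f x < m" unfolding f_def by auto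
  have fanti: "\<And>x y. x < m \<Longrightarrow> y < m \<Longrightarrow> x \<noteq> y \<Longrightarrow> (f x < f y \<longleftrightarrow> y < x)" unfolding f_def by auto
  have finj: "inj_on f {0..<m}" unfolding f_def by (auto simp: inj_on_def)
  have fimg: "f ` {0..<m} = {0..<m}"
  proof
    show "f ` {0..<m} \<subseteq> {0..<m}" using ff by auto
    show "{0..<m} \<subseteq> f ` {0..<m}"
    proof
      fix x assume "x \<in> {0..<m}"
      then show "x \<in> f ` {0..<m}" using ff by (intro image_eqI[of _ _ "f x"]) auto
    qed
  qed
  have mp: "map f xs \<in> permutations_of_set {0..<m}" if "xs \<in> permutations_of_set {0..<m}" for xs
    using that finj fimg by (auto simp: permutations_of_set_def distinct_map)
  have gv: "gav P (map f xs) = gav (\<lambda>a b c. P (\<not>a) (\<not>b) (\<not>c)) xs" if "xs \<in> permutations_of_set {0..<m}" for xs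
    using that by (intro gav_map_anti) (auto simp: permutations_of_set_def fanti)
  have "map f ` Av (\<lambda>a b c. P (\<not>a) (\<not>b) (\<not>c)) m = Av P m"
  proof
    show "map f ` Av (\<lambda>a b c. P (\<not>a) (\<not>b) (\<not>c)) m \<subseteq> Av P m"
      using mp gv by (auto simp: Av_def)
    show "Av P m \<subseteq> map f ` Av (\<lambda>a b c. P (\<not>a) (\<not>b) (\<not>c)) m"
    proof
      fix ys assume ys: "ys \<in> Av P m"
      then have yp: "ys \<in> permutations_of_set {0..<m}" by (simp add: Av_def)
      have bk: "map f (map f ys) = ys"
      proof -
        have "\<forall>y\<in>set ys. f (f y) = y" using yp ff by (auto simp: permutations_of_set_def)
        then have "map (f \<circ> f) ys = ys" by (induction ys) auto
        then show ?thesis by simp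
      qed
      have "map f ys \<in> Av (\<lambda>a b c. P (\<not>a) (\<not>b) (\<not>c)) m"
        using mp[OF yp] gv[OF mp[OF yp]] bk ys by (simp add: Av_def)
      then show "ys \<in> map f ` Av (\<lambda>a b c. P (\<not>a) (\<not>b) (\<not>c)) m" using bk by (metis image_eqI)
    qed
  qed
  moreover have "inj_on (map f) (Av (\<lambda>a b c. P (\<not>a) (\<not>b) (\<not>c)) m)"
  proof (rule inj_onI)
    fix xs ys assume "xs \<in> Av (\<lambda>a b c. P (\<not>a) (\<not>b) (\<not>c)) m" "ys \<in> Av (\<lambda>a b c. P (\<not>a) (\<not>b) (\<not>c)) m" "map f xs = map f ys"
    moreover have "set xs \<union> set ys \<subseteq> {0..<m}" using calculation(1,2) by (auto simp: Av_def permutations_of_set_def)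
    ultimately show "xs = ys" using inj_on_subset[OF finj] by (metis inj_on_map_eq_map)
  qed
  ultimately show ?thesis by (metis card_image)
qed

definition Pf :: "nat \<Rightarrow> nat \<Rightarrow> nat \<Rightarrow> pat" where
  "Pf a b c = (\<lambda>A B C. 
     let lt = (\<lambda>p q. if p = 1 \<and> q = 3 then A else if p = 3 \<and> q = 1 then \<not> A
        else if p = 1 \<and> q = 4 then B else if p = 4 \<and> q = 1 then \<not> B
        else if p = 3 \<and> q = 4 then C else \<not> C) in lt c b \<and> lt b a)"

lemma Pf_cases:
  "Pf 4 3 1 = P1" "Pf 3 4 1 = P2" "Pf 4 1 3 = P3"
  "Pf 1 3 4 = (\<lambda>a b c. P1 (\<not>a) (\<not>b) (\<not>c))"
  "Pf 1 4 3 = (\<lambda>a b c. P2 (\<not>a) (\<not>b) (\<not>c))"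
  "Pf 3 1 4 = (\<lambda>a b c. P3 (\<not>a) (\<not>b) (\<not>c))"
  by (simp_all add: Pf_def P1_def P2_def P3_def fun_eq_iff Let_def) blast+

lemma card_Av_Pf:
  assumes "a \<in> {1,3,4}" "b \<in> {1,3,4}" "c \<in> {1,3,4}" "a \<noteq> b" "b \<noteq> c" "a \<noteq> c"
  shows "card (Av (Pf a b c) m) = size (T m)"
proof -
  have g1: "card (Av P1 m) = size (T m)" by (rule card_Av_good[OF good_P1])
  have g2: "card (Av P2 m) = size (T m)" by (rule card_Av_good[OF good_P2])
  have g3: "card (Av P3 m) = size (T m)" by (rule card_Av_good[OF good_P3])
  have c1: "card (Av (\<lambda>a b c. P1 (\<not>a) (\<not>b) (\<not>c)) m) = size (T m)" using g1 Av_compl by simp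
  have c2: "card (Av (\<lambda>a b c. P2 (\<not>a) (\<not>b) (\<not>c)) m) = size (T m)" using g2 Av_compl by simp
  have c3: "card (Av (\<lambda>a b c. P3 (\<not>a) (\<not>b) (\<not>c)) m) = size (T m)" using g3 Av_compl by simp
  have "(a,b,c) \<in> {(4,3,1),(3,4,1),(4,1,3),(1,3,4),(1,4,3),(3,1,4)}"
    using assms by auto
  then show ?thesis using g1 g2 g3 c1 c2 c3 Pf_cases by auto
qed



lemma Pf_sem:
  fixes X1 X3 X4 :: nat
  assumes "a \<in> {1,3,4}" "b \<in> {1,3,4}" "c \<in> {1,3,4}" "a \<noteq> b" "b \<noteq> c" "a \<noteq> c"
    and "X1 \<noteq> X3" "X1 \<noteq> X4" "X3 \<noteq> X4"
    and "Y = (\<lambda>p. if p = 1 then X1 else if p = 3 then X3 else X4)"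
  shows "Pf a b c (X1 < X3) (X1 < X4) (X3 < X4) \<longleftrightarrow> Y c < Y b \<and> Y b < Y a"
proof -
  have "(a,b,c) = (4,3,1) \<or> (a,b,c) = (3,4,1) \<or> (a,b,c) = (4,1,3) \<or> (a,b,c) = (1,3,4) \<or> (a,b,c) = (1,4,3) \<or> (a,b,c) = (3,1,4)"
    using assms(1-6) by auto
  then show ?thesis
  proof (elim disjE)
    assume "(a,b,c) = (4,3,1)" then have e: "a = 4" "b = 3" "c = 1" by simp_all
    show ?thesis unfolding e Pf_cases using assms(7-10) by (auto simp: P1_def)
  next
    assume "(a,b,c) = (3,4,1)" then have e: "a = 3" "b = 4" "c = 1" by simp_all
    show ?thesis unfolding e Pf_cases using assms(7-10) by (auto simp: P2_def)
  next
    assume "(a,b,c) = (4,1,3)" then have e: "a = 4" "b = 1" "c = 3" by simp_all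
    show ?thesis unfolding e Pf_cases using assms(7-10) by (auto simp: P3_def)
  next
    assume "(a,b,c) = (1,3,4)" then have e: "a = 1" "b = 3" "c = 4" by simp_all
    show ?thesis unfolding e Pf_cases using assms(7-10) by (auto simp: P1_def)
  next
    assume "(a,b,c) = (1,4,3)" then have e: "a = 1" "b = 4" "c = 3" by simp_all
    show ?thesis unfolding e Pf_cases using assms(7-10) by (auto simp: P2_def)
  next
    assume "(a,b,c) = (3,1,4)" then have e: "a = 3" "b = 1" "c = 4" by simp_all
    show ?thesis unfolding e Pf_cases using assms(7-10) by (auto simp: P3_def)
  qed
qed

lemma strict_mono5:
  assumes "strict_mono_on {1..5} (\<iota>::nat\<Rightarrow>nat)"
  shows "\<iota> 1 < \<iota> 2" "\<iota> 2 < \<iota> 3" "\<iota> 3 < \<iota> 4" "\<iota> 4 < \<iota> 5"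
  using assms unfolding strict_mono_on_def by auto

lemma strict_mono5I:
  assumes "(\<iota>::nat\<Rightarrow>nat) 1 < \<iota> 2" "\<iota> 2 < \<iota> 3" "\<iota> 3 < \<iota> 4" "\<iota> 4 < \<iota> 5"
  shows "strict_mono_on {1..5} \<iota>"
proof -
  have e: "{1..5::nat} = {1,2,3,4,5}" by auto
  show ?thesis unfolding strict_mono_on_def e using assms by auto
qed

lemma pop5_iff: "pop5 a b c d e x y \<longleftrightarrow> (x = c \<and> y = b) \<or> (x = b \<and> y = a) \<or> (x = c \<and> y = a)"
  by (auto simp: pop5_def)

lemma contains_A:
  assumes abc: "a \<in> {1,3,4}" "b \<in> {1,3,4}" "c \<in> {1,3,4}" "a \<noteq> b" "b \<noteq> c" "a \<noteq> c"
    and perm: "\<pi> permutes {1..n}"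
  shows "contains_pop (pop5 a b c d e) 5 n \<pi> \<longleftrightarrow> bad3 (Pf a b c) (map \<pi> [1..<n])"
proof
  have injp: "inj_on \<pi> {1..n}" using perm by (rule permutes_inj_on)
  assume "contains_pop (pop5 a b c d e) 5 n \<pi>"
  then obtain \<iota> where sm: "strict_mono_on {1..5} \<iota>" and rng: "\<iota> ` {1..5} \<subseteq> {1..n}"
    and cond: "\<forall>j\<in>{1..5}. \<forall>m\<in>{1..5}. pop5 a b c d e j m \<longrightarrow> \<pi> (\<iota> j) < \<pi> (\<iota> m)"
    unfolding contains_pop_def by blast
  note s = strict_mono5[OF sm]
  have m15: "(1::nat) \<in> {1..5}" "(3::nat) \<in> {1..5}" "(4::nat) \<in> {1..5}" "(5::nat) \<in> {1..5}" by auto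
  have "\<iota> 1 \<in> {1..n}" "\<iota> 5 \<in> {1..n}" using rng m15 by blast+
  then have r1: "\<iota> 1 \<ge> 1" and r5: "\<iota> 5 \<le> n" by auto
  define i where "i = \<iota> 1 - 1"
  define k where "k = \<iota> 3 - 1"
  define l where "l = \<iota> 4 - 1"
  have ikl: "i + 2 \<le> k" "k < l" "l < length (map \<pi> [1..<n])" using s r1 r5 by (auto simp: i_def k_def l_def)
  have lt: "i < n - 1" "k < n - 1" "l < n - 1" using ikl by auto
  have nth: "map \<pi> [1..<n] ! i = \<pi> (\<iota> 1)" "map \<pi> [1..<n] ! k = \<pi> (\<iota> 3)" "map \<pi> [1..<n] ! l = \<pi> (\<iota> 4)"
  proof -
    have "1 + i = \<iota> 1" "1 + k = \<iota> 3" "1 + l = \<iota> 4" using s r1 unfolding i_def k_def l_def by auto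
    then show "map \<pi> [1..<n] ! i = \<pi> (\<iota> 1)" "map \<pi> [1..<n] ! k = \<pi> (\<iota> 3)" "map \<pi> [1..<n] ! l = \<pi> (\<iota> 4)"
      using lt by (simp_all add: nth_upt)
  qed
  have in1: "\<iota> 1 \<in> {1..n}" "\<iota> 3 \<in> {1..n}" "\<iota> 4 \<in> {1..n}" using rng m15 by blast+
  have d: "\<pi> (\<iota> 1) \<noteq> \<pi> (\<iota> 3)" "\<pi> (\<iota> 1) \<noteq> \<pi> (\<iota> 4)" "\<pi> (\<iota> 3) \<noteq> \<pi> (\<iota> 4)"
    using injp in1 s by (auto dest: inj_onD)
  define Y where "Y = (\<lambda>p::nat. if p = 1 then \<pi> (\<iota> 1) else if p = 3 then \<pi> (\<iota> 3) else \<pi> (\<iota> 4))"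
  have Yp: "\<And>p::nat. p \<in> {1,3,4} \<Longrightarrow> Y p = \<pi> (\<iota> p)" unfolding Y_def by auto
  have abc5: "a \<in> {1..5}" "b \<in> {1..5}" "c \<in> {1..5}" using abc by auto
  have "pop5 a b c d e c b" "pop5 a b c d e b a" by (simp_all add: pop5_iff)
  then have "\<pi> (\<iota> c) < \<pi> (\<iota> b)" "\<pi> (\<iota> b) < \<pi> (\<iota> a)" using cond abc5 by blast+
  then have "Y c < Y b \<and> Y b < Y a" using Yp abc by simp
  then have "Pf a b c (\<pi> (\<iota> 1) < \<pi> (\<iota> 3)) (\<pi> (\<iota> 1) < \<pi> (\<iota> 4)) (\<pi> (\<iota> 3) < \<pi> (\<iota> 4))"
    using Pf_sem[OF abc d Y_def] by simp
  then show "bad3 (Pf a b c) (map \<pi> [1..<n])" unfolding bad3_def using ikl unfolding nth[symmetric] by blast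
next
  have injp: "inj_on \<pi> {1..n}" using perm by (rule permutes_inj_on)
  assume "bad3 (Pf a b c) (map \<pi> [1..<n])"
  then obtain i k l where ikl: "i + 2 \<le> k" "k < l" "l < length (map \<pi> [1..<n])"
    and P: "Pf a b c (map \<pi> [1..<n] ! i < map \<pi> [1..<n] ! k) (map \<pi> [1..<n] ! i < map \<pi> [1..<n] ! l) (map \<pi> [1..<n] ! k < map \<pi> [1..<n] ! l)"
    unfolding bad3_def by blast
  define \<iota> where "\<iota> = (\<lambda>p::nat. if p = 1 then i+1 else if p = 2 then i+2 else if p = 3 then k+1 else if p = 4 then l+1 else l+2)"
  have sm: "strict_mono_on {1..5} \<iota>" by (rule strict_mono5I) (use ikl in \<open>auto simp: \<iota>_def\<close>)
  have e: "{1..5::nat} = {1,2,3,4,5}" by auto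
  have rng: "\<iota> ` {1..5} \<subseteq> {1..n}" unfolding e using ikl by (auto simp: \<iota>_def)
  have nth: "map \<pi> [1..<n] ! i = \<pi> (\<iota> 1)" "map \<pi> [1..<n] ! k = \<pi> (\<iota> 3)" "map \<pi> [1..<n] ! l = \<pi> (\<iota> 4)"
    using ikl by (auto simp: \<iota>_def)
  have m15: "(1::nat) \<in> {1..5}" "(3::nat) \<in> {1..5}" "(4::nat) \<in> {1..5}" by auto
  have in1: "\<iota> 1 \<in> {1..n}" "\<iota> 3 \<in> {1..n}" "\<iota> 4 \<in> {1..n}" using rng m15 by blast+
  have s: "\<iota> 1 \<noteq> \<iota> 3" "\<iota> 1 \<noteq> \<iota> 4" "\<iota> 3 \<noteq> \<iota> 4" using ikl by (auto simp: \<iota>_def)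
  have d: "\<pi> (\<iota> 1) \<noteq> \<pi> (\<iota> 3)" "\<pi> (\<iota> 1) \<noteq> \<pi> (\<iota> 4)" "\<pi> (\<iota> 3) \<noteq> \<pi> (\<iota> 4)"
    using injp in1 s by (auto dest: inj_onD)
  define Y where "Y = (\<lambda>p::nat. if p = 1 then \<pi> (\<iota> 1) else if p = 3 then \<pi> (\<iota> 3) else \<pi> (\<iota> 4))"
  have Yp: "\<And>p::nat. p \<in> {1,3,4} \<Longrightarrow> Y p = \<pi> (\<iota> p)" unfolding Y_def by auto
  have "Y c < Y b \<and> Y b < Y a" using Pf_sem[OF abc d Y_def] P nth by simp
  then have o: "\<pi> (\<iota> c) < \<pi> (\<iota> b)" "\<pi> (\<iota> b) < \<pi> (\<iota> a)" using Yp abc by auto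
  have "\<forall>j\<in>{1..5}. \<forall>m\<in>{1..5}. pop5 a b c d e j m \<longrightarrow> \<pi> (\<iota> j) < \<pi> (\<iota> m)"
  proof (intro ballI impI)
    fix j m assume "pop5 a b c d e j m"
    then have "(j = c \<and> m = b) \<or> (j = b \<and> m = a) \<or> (j = c \<and> m = a)" by (simp add: pop5_iff)
    then show "\<pi> (\<iota> j) < \<pi> (\<iota> m)" using o by auto
  qed
  then show "contains_pop (pop5 a b c d e) 5 n \<pi>" unfolding contains_pop_def using sm rng by blast
qed

lemma revnth: "t < n - 1 \<Longrightarrow> rev (map \<pi> [1..<n]) ! t = \<pi> (n - 1 - t)"
proof -
  assume t: "t < n - 1"
  then have "Suc (n - Suc (Suc t)) = n - Suc t" by simp
  then show ?thesis using t by (simp add: rev_nth nth_upt)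
qed

lemma contains_B:
  assumes abc: "a \<in> {1,2,4}" "b \<in> {1,2,4}" "c \<in> {1,2,4}" "a \<noteq> b" "b \<noteq> c" "a \<noteq> c"
    and perm: "\<pi> permutes {1..n}"
  shows "contains_pop (pop5 a b c d e) 5 n \<pi> \<longleftrightarrow> bad3 (Pf (5-a) (5-b) (5-c)) (rev (map \<pi> [1..<n]))"
proof -
  have abc': "5-a \<in> {1,3,4}" "5-b \<in> {1,3,4}" "5-c \<in> {1,3,4}" "5-a \<noteq> 5-b" "5-b \<noteq> 5-c" "5-a \<noteq> 5-c"
    using abc by auto
  have injp: "inj_on \<pi> {1..n}" using perm by (rule permutes_inj_on)
  let ?xs = "rev (map \<pi> [1..<n])"
  show ?thesis
  proof
    assume "contains_pop (pop5 a b c d e) 5 n \<pi>"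
    then obtain \<iota> where sm: "strict_mono_on {1..5} \<iota>" and rng: "\<iota> ` {1..5} \<subseteq> {1..n}"
      and cond: "\<forall>j\<in>{1..5}. \<forall>m\<in>{1..5}. pop5 a b c d e j m \<longrightarrow> \<pi> (\<iota> j) < \<pi> (\<iota> m)"
      unfolding contains_pop_def by blast
    note s = strict_mono5[OF sm]
    have m15: "(1::nat) \<in> {1..5}" "(2::nat) \<in> {1..5}" "(4::nat) \<in> {1..5}" "(5::nat) \<in> {1..5}" by auto
    have "\<iota> 1 \<in> {1..n}" "\<iota> 5 \<in> {1..n}" using rng m15 by blast+
    then have r1: "\<iota> 1 \<ge> 1" and r5: "\<iota> 5 \<le> n" by auto
    define i where "i = n - 1 - \<iota> 4"
    define k where "k = n - 1 - \<iota> 2"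
    define l where "l = n - 1 - \<iota> 1"
    have ikl: "i + 2 \<le> k" "k < l" "l < length ?xs" using s r1 r5 by (auto simp: i_def k_def l_def)
    have lt: "i < n - 1" "k < n - 1" "l < n - 1" using ikl by auto
    have nth: "?xs ! i = \<pi> (\<iota> 4)" "?xs ! k = \<pi> (\<iota> 2)" "?xs ! l = \<pi> (\<iota> 1)"
    proof -
      have "n - 1 - i = \<iota> 4" "n - 1 - k = \<iota> 2" "n - 1 - l = \<iota> 1" using s r1 r5 unfolding i_def k_def l_def by auto
      then show "?xs ! i = \<pi> (\<iota> 4)" "?xs ! k = \<pi> (\<iota> 2)" "?xs ! l = \<pi> (\<iota> 1)"
        using lt revnth by metis+
    qed
    have in1: "\<iota> 1 \<in> {1..n}" "\<iota> 2 \<in> {1..n}" "\<iota> 4 \<in> {1..n}" using rng m15 by blast+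
    have d: "\<pi> (\<iota> 4) \<noteq> \<pi> (\<iota> 2)" "\<pi> (\<iota> 4) \<noteq> \<pi> (\<iota> 1)" "\<pi> (\<iota> 2) \<noteq> \<pi> (\<iota> 1)"
      using injp in1 s by (auto dest: inj_onD)
    define Y where "Y = (\<lambda>p::nat. if p = 1 then \<pi> (\<iota> 4) else if p = 3 then \<pi> (\<iota> 2) else \<pi> (\<iota> 1))"
    have Yp: "\<And>q::nat. q \<in> {1,2,4} \<Longrightarrow> Y (5 - q) = \<pi> (\<iota> q)" unfolding Y_def by auto
    have abc5: "a \<in> {1..5}" "b \<in> {1..5}" "c \<in> {1..5}" using abc by auto
    have "pop5 a b c d e c b" "pop5 a b c d e b a" by (simp_all add: pop5_iff)
    then have "\<pi> (\<iota> c) < \<pi> (\<iota> b)" "\<pi> (\<iota> b) < \<pi> (\<iota> a)" using cond abc5 by blast+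
    then have "Y (5-c) < Y (5-b) \<and> Y (5-b) < Y (5-a)" using Yp abc by simp
    then have "Pf (5-a) (5-b) (5-c) (\<pi> (\<iota> 4) < \<pi> (\<iota> 2)) (\<pi> (\<iota> 4) < \<pi> (\<iota> 1)) (\<pi> (\<iota> 2) < \<pi> (\<iota> 1))"
      using Pf_sem[OF abc' d Y_def] by simp
    then show "bad3 (Pf (5-a) (5-b) (5-c)) ?xs" unfolding bad3_def using ikl unfolding nth[symmetric] by blast
  next
    assume "bad3 (Pf (5-a) (5-b) (5-c)) ?xs"
    then obtain i k l where ikl: "i + 2 \<le> k" "k < l" "l < length ?xs"
      and P: "Pf (5-a) (5-b) (5-c) (?xs ! i < ?xs ! k) (?xs ! i < ?xs ! l) (?xs ! k < ?xs ! l)"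
      unfolding bad3_def by blast
    have lt: "i < n - 1" "k < n - 1" "l < n - 1" using ikl by auto
    define \<iota> where "\<iota> = (\<lambda>p::nat. if p = 1 then n - 1 - l else if p = 2 then n - 1 - k else if p = 3 then n - k else if p = 4 then n - 1 - i else n - i)"
    have sm: "strict_mono_on {1..5} \<iota>" by (rule strict_mono5I) (use ikl lt in \<open>auto simp: \<iota>_def\<close>)
    have e: "{1..5::nat} = {1,2,3,4,5}" by auto
    have rng: "\<iota> ` {1..5} \<subseteq> {1..n}" unfolding e using ikl lt by (auto simp: \<iota>_def)
    have nth: "?xs ! i = \<pi> (\<iota> 4)" "?xs ! k = \<pi> (\<iota> 2)" "?xs ! l = \<pi> (\<iota> 1)"
      using lt revnth unfolding \<iota>_def by auto
    have m15: "(1::nat) \<in> {1..5}" "(2::nat) \<in> {1..5}" "(4::nat) \<in> {1..5}" by auto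
    have in1: "\<iota> 1 \<in> {1..n}" "\<iota> 2 \<in> {1..n}" "\<iota> 4 \<in> {1..n}" using rng m15 by blast+
    have s: "\<iota> 4 \<noteq> \<iota> 2" "\<iota> 4 \<noteq> \<iota> 1" "\<iota> 2 \<noteq> \<iota> 1" using ikl lt by (auto simp: \<iota>_def)
    have d: "\<pi> (\<iota> 4) \<noteq> \<pi> (\<iota> 2)" "\<pi> (\<iota> 4) \<noteq> \<pi> (\<iota> 1)" "\<pi> (\<iota> 2) \<noteq> \<pi> (\<iota> 1)"
      using injp in1 s by (auto dest: inj_onD)
    define Y where "Y = (\<lambda>p::nat. if p = 1 then \<pi> (\<iota> 4) else if p = 3 then \<pi> (\<iota> 2) else \<pi> (\<iota> 1))"
    have Yp: "\<And>q::nat. q \<in> {1,2,4} \<Longrightarrow> Y (5 - q) = \<pi> (\<iota> q)" unfolding Y_def by auto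
    have "Y (5-c) < Y (5-b) \<and> Y (5-b) < Y (5-a)" using Pf_sem[OF abc' d Y_def] P nth by simp
    then have o: "\<pi> (\<iota> c) < \<pi> (\<iota> b)" "\<pi> (\<iota> b) < \<pi> (\<iota> a)" using Yp abc by auto
    have "\<forall>j\<in>{1..5}. \<forall>m\<in>{1..5}. pop5 a b c d e j m \<longrightarrow> \<pi> (\<iota> j) < \<pi> (\<iota> m)"
    proof (intro ballI impI)
      fix j m assume "pop5 a b c d e j m"
      then have "(j = c \<and> m = b) \<or> (j = b \<and> m = a) \<or> (j = c \<and> m = a)" by (simp add: pop5_iff)
      then show "\<pi> (\<iota> j) < \<pi> (\<iota> m)" using o by auto
    qed
    then show "contains_pop (pop5 a b c d e) 5 n \<pi>" unfolding contains_pop_def using sm rng by blast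
  qed
qed



lemma perm_list_card:
  "card {\<pi>. \<pi> permutes {1..n} \<and> Q (map \<pi> [1..<Suc n])} = card {xs \<in> permutations_of_set {1..n}. Q xs}"
proof (rule bij_betw_same_card[of "\<lambda>\<pi>. map \<pi> [1..<Suc n]"])
  show "bij_betw (\<lambda>\<pi>. map \<pi> [1..<Suc n]) {\<pi>. \<pi> permutes {1..n} \<and> Q (map \<pi> [1..<Suc n])} {xs \<in> permutations_of_set {1..n}. Q xs}"
    unfolding bij_betw_def
  proof
    show "inj_on (\<lambda>\<pi>. map \<pi> [1..<Suc n]) {\<pi>. \<pi> permutes {1..n} \<and> Q (map \<pi> [1..<Suc n])}"
    proof (rule inj_onI)
      fix p q assume p: "p \<in> {\<pi>. \<pi> permutes {1..n} \<and> Q (map \<pi> [1..<Suc n])}" and q: "q \<in> {\<pi>. \<pi> permutes {1..n} \<and> Q (map \<pi> [1..<Suc n])}"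
        and eq: "map p [1..<Suc n] = map q [1..<Suc n]"
      have pq: "p permutes {1..n}" "q permutes {1..n}" using p q by auto
      show "p = q"
      proof
        fix x show "p x = q x"
        proof (cases "x \<in> {1..n}")
          case True
          then have "x \<in> set [1..<Suc n]" by auto
          then show ?thesis using eq by (metis map_eq_conv)
        next
          case False
          then show ?thesis using pq by (simp add: permutes_not_in)
        qed
      qed
    qed
  next
    show "(\<lambda>\<pi>. map \<pi> [1..<Suc n]) ` {\<pi>. \<pi> permutes {1..n} \<and> Q (map \<pi> [1..<Suc n])} = {xs \<in> permutations_of_set {1..n}. Q xs}"
    proof
      show "(\<lambda>\<pi>. map \<pi> [1..<Suc n]) ` {\<pi>. \<pi> permutes {1..n} \<and> Q (map \<pi> [1..<Suc n])} \<subseteq> {xs \<in> permutations_of_set {1..n}. Q xs}"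
      proof (rule image_subsetI)
        fix p assume p: "p \<in> {\<pi>. \<pi> permutes {1..n} \<and> Q (map \<pi> [1..<Suc n])}"
        then have pp: "p permutes {1..n}" by simp
        have su: "set [1..<Suc n] = {1..n}" by (simp only: set_upt atLeastLessThanSuc_atLeastAtMost)
        have "set (map p [1..<Suc n]) = {1..n}"
          by (simp only: set_map su permutes_image[OF pp])
        moreover have "distinct (map p [1..<Suc n])"
          using permutes_inj_on[OF pp] unfolding distinct_map su by simp
        ultimately show "map p [1..<Suc n] \<in> {xs \<in> permutations_of_set {1..n}. Q xs}" using p by (auto simp: permutations_of_set_def)
      qed
    next
      show "{xs \<in> permutations_of_set {1..n}. Q xs} \<subseteq> (\<lambda>\<pi>. map \<pi> [1..<Suc n]) ` {\<pi>. \<pi> permutes {1..n} \<and> Q (map \<pi> [1..<Suc n])}"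
      proof
        fix xs assume xs: "xs \<in> {xs \<in> permutations_of_set {1..n}. Q xs}"
        then have sx: "set xs = {1..n}" and dx: "distinct xs" and qx: "Q xs" by (auto simp: permutations_of_set_def)
        have lx: "length xs = n" using sx dx by (metis card_atLeastAtMost diff_Suc_1 distinct_card)
        define p where "p = (\<lambda>i. if i \<in> {1..n} then xs ! (i - 1) else i)"
        have mp: "map p [1..<Suc n] = xs"
        proof (rule nth_equalityI)
          show "length (map p [1..<Suc n]) = length xs" using lx by simp
          fix i assume "i < length (map p [1..<Suc n])"
          then have "i < n" by (simp del: upt_Suc)
          then show "map p [1..<Suc n] ! i = xs ! i" by (simp add: p_def nth_upt del: upt_Suc)
        qed
        have bij: "bij_betw p {1..n} {1..n}"
        proof -
          have "bij_betw (\<lambda>i. xs ! (i - 1)) {1..n} {1..n}"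
          proof -
            have "bij_betw ((!) xs) {..<length xs} (set xs)" using dx by (rule bij_betw_nth) auto
            moreover have "bij_betw (\<lambda>i. i - 1) {1..n} {..<n}"
              by (rule bij_betw_byWitness[of _ Suc]) auto
            ultimately have "bij_betw ((!) xs \<circ> (\<lambda>i. i - 1)) {1..n} (set xs)" using lx by (metis bij_betw_trans)
            then show ?thesis using sx by (simp add: o_def)
          qed
          moreover have "bij_betw p {1..n} {1..n} = bij_betw (\<lambda>i. xs ! (i - 1)) {1..n} {1..n}"
            by (rule bij_betw_cong) (simp add: p_def)
          ultimately show ?thesis by simp
        qed
        have "p permutes {1..n}" by (rule bij_imp_permutes[OF bij]) (auto simp: p_def)
        then show "xs \<in> (\<lambda>\<pi>. map \<pi> [1..<Suc n]) ` {\<pi>. \<pi> permutes {1..n} \<and> Q (map \<pi> [1..<Suc n])}"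
          using mp qx by (metis (mono_tags, lifting) image_eqI mem_Collect_eq)
      qed
    qed
  qed
qed

lemma split_last:
  assumes fS: "finite S" and ne: "S \<noteq> {}"
  shows "card {xs \<in> permutations_of_set S. Rp (butlast xs)} = (\<Sum>r\<in>S. card {ys \<in> permutations_of_set (S - {r}). Rp ys})"
proof -
  define F where "F = (\<lambda>r. (\<lambda>ys. ys @ [r]) ` {ys \<in> permutations_of_set (S - {r}). Rp ys})"
  have eq: "{xs \<in> permutations_of_set S. Rp (butlast xs)} = (\<Union>r\<in>S. F r)"
  proof
    show "{xs \<in> permutations_of_set S. Rp (butlast xs)} \<subseteq> (\<Union>r\<in>S. F r)"
    proof
      fix xs assume xs: "xs \<in> {xs \<in> permutations_of_set S. Rp (butlast xs)}"
      then have sx: "set xs = S" and dx: "distinct xs" and rx: "Rp (butlast xs)"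
        unfolding permutations_of_set_def by simp_all
      have xne: "xs \<noteq> []" using sx ne by (cases xs) simp_all
      then have dec: "xs = butlast xs @ [last xs]" by simp
      have lS: "last xs \<in> S" using xne sx by (metis last_in_set)
      have dd: "distinct (butlast xs @ [last xs])" using dx dec by metis
      then have db: "distinct (butlast xs)" and nl: "last xs \<notin> set (butlast xs)" by simp_all
      have "set (butlast xs @ [last xs]) = S" using sx dec by metis
      then have "insert (last xs) (set (butlast xs)) = S" by simp
      then have sb: "set (butlast xs) = S - {last xs}" using nl by blast
      have "butlast xs \<in> {ys \<in> permutations_of_set (S - {last xs}). Rp ys}"
        unfolding permutations_of_set_def using sb db rx by simp
      then have "xs \<in> F (last xs)" unfolding F_def by (rule image_eqI[where f="\<lambda>ys. ys @ [last xs]", OF dec])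
      then show "xs \<in> (\<Union>r\<in>S. F r)" using lS by blast
    qed
    show "(\<Union>r\<in>S. F r) \<subseteq> {xs \<in> permutations_of_set S. Rp (butlast xs)}"
    proof
      fix xs assume "xs \<in> (\<Union>r\<in>S. F r)"
      then obtain r ys where r: "r \<in> S" and ys: "ys \<in> permutations_of_set (S - {r})" "Rp ys" and xs: "xs = ys @ [r]"
        unfolding F_def by blast
      have sy: "set ys = S - {r}" "distinct ys" using ys(1) unfolding permutations_of_set_def by simp_all
      have "set xs = S" unfolding xs using r sy(1) by auto
      moreover have "distinct xs" unfolding xs using sy by simp
      moreover have "Rp (butlast xs)" unfolding xs using ys(2) by simp
      ultimately show "xs \<in> {xs \<in> permutations_of_set S. Rp (butlast xs)}" unfolding permutations_of_set_def by simp
    qed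
  qed
  have "card (\<Union>r\<in>S. F r) = (\<Sum>r\<in>S. card (F r))"
  proof (rule card_UN_disjoint[OF fS])
    show "\<forall>r\<in>S. finite (F r)" unfolding F_def by simp
    show "\<forall>r\<in>S. \<forall>r'\<in>S. r \<noteq> r' \<longrightarrow> F r \<inter> F r' = {}" unfolding F_def by blast
  qed
  moreover have "\<And>r. card (F r) = card {ys \<in> permutations_of_set (S - {r}). Rp ys}"
    unfolding F_def by (rule card_image) (simp add: inj_on_def)
  ultimately show ?thesis using eq by simp
qed



lemma iso_card:
  assumes r: "r \<in> {1..n}"
  shows "card {ys \<in> permutations_of_set ({1..n} - {r}). gav Q ys} = card (Av Q (n - 1))"
proof -
  define f where "f = (\<lambda>i::nat. if i + 1 < r then i + 1 else i + 2)"
  define g where "g = (\<lambda>y::nat. if y < r then y - 1 else y - 2)"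
  have fmono: "\<And>x y. f x < f y \<longleftrightarrow> x < y" unfolding f_def by auto
  have finj: "inj f" by (rule injI) (metis fmono less_irrefl linorder_neqE_nat)
  have fg: "\<And>y. y \<in> {1..n} - {r} \<Longrightarrow> f (g y) = y" using r unfolding f_def g_def by auto
  have gin: "\<And>y. y \<in> {1..n} - {r} \<Longrightarrow> g y \<in> {0..<n-1}" using r unfolding g_def by auto
  have fimg: "f ` {0..<n-1} = {1..n} - {r}"
  proof
    show "f ` {0..<n-1} \<subseteq> {1..n} - {r}" using r unfolding f_def by auto
    show "{1..n} - {r} \<subseteq> f ` {0..<n-1}"
    proof
      fix y assume y: "y \<in> {1..n} - {r}"
      show "y \<in> f ` {0..<n-1}" using fg[OF y] gin[OF y] by (metis imageI)
    qed
  qed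
  have "map f ` Av Q (n - 1) = {ys \<in> permutations_of_set ({1..n} - {r}). gav Q ys}"
  proof
    show "map f ` Av Q (n - 1) \<subseteq> {ys \<in> permutations_of_set ({1..n} - {r}). gav Q ys}"
    proof (rule image_subsetI)
      fix xs assume xs: "xs \<in> Av Q (n - 1)"
      then have sx: "set xs = {0..<n-1}" and dx: "distinct xs" and gx: "gav Q xs"
        unfolding Av_def permutations_of_set_def by simp_all
      have "set (map f xs) = {1..n} - {r}" using sx fimg by simp
      moreover have "distinct (map f xs)" using dx inj_on_subset[OF finj] by (simp add: distinct_map)
      moreover have "gav Q (map f xs)" using gx by (simp add: gav_map_mono fmono)
      ultimately show "map f xs \<in> {ys \<in> permutations_of_set ({1..n} - {r}). gav Q ys}"
        unfolding permutations_of_set_def by simp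
    qed
    show "{ys \<in> permutations_of_set ({1..n} - {r}). gav Q ys} \<subseteq> map f ` Av Q (n - 1)"
    proof
      fix ys assume ys: "ys \<in> {ys \<in> permutations_of_set ({1..n} - {r}). gav Q ys}"
      then have sy: "set ys = {1..n} - {r}" and dy: "distinct ys" and gy: "gav Q ys"
        unfolding permutations_of_set_def by simp_all
      define xs where "xs = map g ys"
      have "\<forall>y\<in>set ys. f (g y) = y" using fg sy by blast
      then have "map (f \<circ> g) ys = ys" by (induction ys) auto
      then have mf: "map f xs = ys" unfolding xs_def by simp
      have "f ` set xs = f ` {0..<n-1}" using mf sy fimg by (metis set_map)
      then have sx: "set xs = {0..<n-1}" using finj by (simp add: inj_image_eq_iff)
      have dx: "distinct xs" using dy mf by (metis distinct_map)
      have gx: "gav Q xs" using gy mf by (metis gav_map_mono fmono)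
      have "xs \<in> Av Q (n - 1)" using sx dx gx unfolding Av_def permutations_of_set_def by simp
      then show "ys \<in> map f ` Av Q (n - 1)" using mf by (metis image_eqI)
    qed
  qed
  moreover have "inj_on (map f) (Av Q (n - 1))" using finj by (simp add: inj_on_def inj_map_eq_map)
  ultimately show ?thesis by (metis card_image)
qed

lemma rev_card:
  "card {ys \<in> permutations_of_set X. gav Q (rev ys)} = card {ys \<in> permutations_of_set X. gav Q ys}"
proof -
  have "rev ` {ys \<in> permutations_of_set X. gav Q (rev ys)} = {ys \<in> permutations_of_set X. gav Q ys}"
  proof
    show "rev ` {ys \<in> permutations_of_set X. gav Q (rev ys)} \<subseteq> {ys \<in> permutations_of_set X. gav Q ys}"
    proof (rule image_subsetI)
      fix ys assume "ys \<in> {ys \<in> permutations_of_set X. gav Q (rev ys)}"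
      then have "set ys = X" "distinct ys" "gav Q (rev ys)" unfolding permutations_of_set_def by simp_all
      then show "rev ys \<in> {ys \<in> permutations_of_set X. gav Q ys}" unfolding permutations_of_set_def by simp
    qed
    show "{ys \<in> permutations_of_set X. gav Q ys} \<subseteq> rev ` {ys \<in> permutations_of_set X. gav Q (rev ys)}"
    proof
      fix ys assume "ys \<in> {ys \<in> permutations_of_set X. gav Q ys}"
      then have "set ys = X" "distinct ys" "gav Q ys" unfolding permutations_of_set_def by simp_all
      then have "rev ys \<in> {ys \<in> permutations_of_set X. gav Q (rev ys)}" unfolding permutations_of_set_def by simp
      moreover have "ys = rev (rev ys)" by simp
      ultimately show "ys \<in> rev ` {ys \<in> permutations_of_set X. gav Q (rev ys)}" by (rule rev_image_eqI)
    qed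
  qed
  moreover have "inj_on rev {ys \<in> permutations_of_set X. gav Q (rev ys)}" by (rule inj_onI) simp
  ultimately show ?thesis using card_image by metis
qed

lemma butlast_map_upt: "1 \<le> n \<Longrightarrow> butlast (map \<pi> [1..<Suc n]) = map \<pi> [1..<n]"
  by (simp del: upt_Suc add: upt_Suc_append)

lemma avoid_A:
  assumes abc: "a \<in> {1,3,4}" "b \<in> {1,3,4}" "c \<in> {1,3,4}" "a \<noteq> b" "b \<noteq> c" "a \<noteq> c" and n: "1 \<le> n"
  shows "card (avoiders (pop5 a b c d e) 5 n) = n * size (T (n - 1))"
proof -
  have "avoiders (pop5 a b c d e) 5 n = {\<pi>. \<pi> permutes {1..n} \<and> gav (Pf a b c) (butlast (map \<pi> [1..<Suc n]))}"
    unfolding avoiders_def using contains_A[OF abc] butlast_map_upt[OF n] gav_iff by auto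
  then have "card (avoiders (pop5 a b c d e) 5 n) = card {xs \<in> permutations_of_set {1..n}. gav (Pf a b c) (butlast xs)}"
    using perm_list_card[where Q="\<lambda>xs. gav (Pf a b c) (butlast xs)"] by (simp del: upt_Suc)
  also have "\<dots> = (\<Sum>r\<in>{1..n}. card {ys \<in> permutations_of_set ({1..n} - {r}). gav (Pf a b c) ys})"
    using n by (intro split_last) auto
  also have "\<dots> = (\<Sum>r\<in>{1..n}. size (T (n - 1)))"
    using iso_card card_Av_Pf[OF abc] by simp
  finally show ?thesis by simp
qed

lemma avoid_B:
  assumes abc: "a \<in> {1,2,4}" "b \<in> {1,2,4}" "c \<in> {1,2,4}" "a \<noteq> b" "b \<noteq> c" "a \<noteq> c" and n: "1 \<le> n"
  shows "card (avoiders (pop5 a b c d e) 5 n) = n * size (T (n - 1))"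
proof -
  have abc': "5-a \<in> {1,3,4}" "5-b \<in> {1,3,4}" "5-c \<in> {1,3,4}" "5-a \<noteq> 5-b" "5-b \<noteq> 5-c" "5-a \<noteq> 5-c"
    using abc by auto
  have "avoiders (pop5 a b c d e) 5 n = {\<pi>. \<pi> permutes {1..n} \<and> gav (Pf (5-a) (5-b) (5-c)) (rev (butlast (map \<pi> [1..<Suc n])))}"
    unfolding avoiders_def using contains_B[OF abc] butlast_map_upt[OF n] gav_iff by auto
  then have "card (avoiders (pop5 a b c d e) 5 n) = card {xs \<in> permutations_of_set {1..n}. gav (Pf (5-a) (5-b) (5-c)) (rev (butlast xs))}"
    using perm_list_card[where Q="\<lambda>xs. gav (Pf (5-a) (5-b) (5-c)) (rev (butlast xs))"] by (simp del: upt_Suc)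
  also have "\<dots> = (\<Sum>r\<in>{1..n}. card {ys \<in> permutations_of_set ({1..n} - {r}). gav (Pf (5-a) (5-b) (5-c)) (rev ys)})"
    using n by (intro split_last) auto
  also have "\<dots> = (\<Sum>r\<in>{1..n}. size (T (n - 1)))"
    using iso_card card_Av_Pf[OF abc'] rev_card by simp
  finally show ?thesis by simp
qed

lemma count_all:
  fixes a b c d e :: nat
  assumes s: "{a, b, c, d, e} = {1..5}"
    and de: "{d, e} = {2, 5} \<or> {d, e} = {3, 5}"
    and n: "1 \<le> n"
  shows "card (avoiders (pop5 a b c d e) 5 n) = n * size (T (n - 1))"
proof -
  have "set [a,b,c,d,e] = {1..5}" using s by simp
  then have "card (set [a,b,c,d,e]) = length [a,b,c,d,e]" by simp
  then have "distinct [a,b,c,d,e]" by (rule card_distinct)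
  then have dist: "a \<noteq> b" "a \<noteq> c" "a \<noteq> d" "a \<noteq> e" "b \<noteq> c" "b \<noteq> d" "b \<noteq> e" "c \<noteq> d" "c \<noteq> e" by auto
  have in5: "a \<in> {1..5}" "b \<in> {1..5}" "c \<in> {1..5}" using s by blast+
  have nde: "a \<notin> {d, e}" "b \<notin> {d, e}" "c \<notin> {d, e}" using dist by auto
  from de show ?thesis
  proof
    assume h: "{d, e} = {2, 5}"
    then have "a \<notin> {2,5}" "b \<notin> {2,5}" "c \<notin> {2,5}" using nde by simp_all
    then have "a \<in> {1,3,4}" "b \<in> {1,3,4}" "c \<in> {1,3,4}" using in5 by auto
    then show ?thesis using avoid_A dist n by blast
  next
    assume h: "{d, e} = {3, 5}"
    then have "a \<notin> {3,5}" "b \<notin> {3,5}" "c \<notin> {3,5}" using nde by simp_all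
    then have "a \<in> {1,2,4}" "b \<in> {1,2,4}" "c \<in> {1,2,4}" using in5 by auto
    then show ?thesis using avoid_B dist n by blast
  qed
qed

theorem mainTheorem11:
  fixes a b c d e a' b' c' d' e' :: nat
  assumes "{a, b, c, d, e} = {1..5}"
    and "{d, e} = {2, 5} \<or> {d, e} = {3, 5}"
    and "{a', b', c', d', e'} = {1..5}"
    and "{d', e'} = {2, 5} \<or> {d', e'} = {3, 5}"
  shows "wilf_equiv (pop5 a b c d e) (pop5 a' b' c' d' e') 5"
  unfolding wilf_equiv_def
proof (intro allI impI)
  fix n :: nat assume "n \<ge> 1"
  then show "card (avoiders (pop5 a b c d e) 5 n) = card (avoiders (pop5 a' b' c' d' e') 5 n)"
    using count_all[OF assms(1,2)] count_all[OF assms(3,4)] by simp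
qed


end
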